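(* Let $n\ge3$, $n\ne 4$, and let $\mathcal M$ be a map of class $2_{\{0,1\}}$ whose underlying graph is the Rose Window graph $R_n(2,1)$. Then $\mathcal M$ has faces of two different lengths.
   Context: For $n\ge3$, $1\le r\le n-1$ with $r\ne n/2$, and $0\le a\le n-1$, the Rose Window graph $R_n(a,r)$ has vertex set $\{x_i,y_i: i\in\mathbb Z_n\}$ and edges $x_ix_{i+1}$, $y_iy_{i+r}$, $x_iy_i$, $x_iy_{i-a}$ for $i\in\mathbb Z_n$ (indices mod $n$). A map is a $2$-cell embedding of a connected simple graph (its underlying graph) in a closed surface; the components of the complement are the faces, and the length of a face is the length of its boundary walk. All maps considered are polytopal: flags correspond bijectively to incident triples (vertex, edge, face). For a flag $\Phi$ and $i\in\{0,1,2\}$, $\Phi^i$ is the unique flag differing from $\Phi$ exactly in its vertex ($i=0$), edge ($i=1$) or face ($i=2$). $\mathrm{Aut}(\mathcal M)$ is the group of automorphisms of the underlying graph preserving the set of faces. A map is in class $2_{\{0,1\}}$ if $\mathrm{Aut}(\mathcal M)$ has exactly two orbits on flags and for every flag $\Phi$, the flags $\Phi^0,\Phi^1$ lie in the orbit of $\Phi$ while $\Phi^2$ does not. *)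

theory Defs
  imports Main
begin

text \<open>Rose Window graph R_n(a,r). Vertex x_i is (False, i), vertex y_i is (True, i), 0 <= i < n.
  Edges are two-element vertex sets.\<close>

definition rose_V :: "nat \<Rightarrow> (bool \<times> nat) set" where
  "rose_V n = {(b, i). i < n}"

definition rose_E :: "nat \<Rightarrow> nat \<Rightarrow> nat \<Rightarrow> (bool \<times> nat) set set" where
  "rose_E n a r = (\<Union>i\<in>{..<n}.
      { {(False, i), (False, (i + 1) mod n)},
        {(True, i), (True, (i + r) mod n)},
        {(False, i), (True, i)},
        {(False, i), (True, (i + n - a) mod n)} })"

definition is_cycle_edges :: "'v set set \<Rightarrow> bool" where
  "is_cycle_edges f \<longleftrightarrow> (\<exists>vs. distinct vs \<and> length vs \<ge> 3 \<and>
      f = {{vs ! i, vs ! ((i + 1) mod length vs)} | i. i < length vs})"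

definition simple_graph :: "'v set \<Rightarrow> 'v set set \<Rightarrow> bool" where
  "simple_graph V E \<longleftrightarrow> finite V \<and> (\<forall>e\<in>E. \<exists>u v. u \<in> V \<and> v \<in> V \<and> u \<noteq> v \<and> e = {u, v})"

definition graph_connected :: "'v set \<Rightarrow> 'v set set \<Rightarrow> bool" where
  "graph_connected V E \<longleftrightarrow> (\<forall>u\<in>V. \<forall>v\<in>V. (u, v) \<in> {(x, y). {x, y} \<in> E}\<^sup>*)"

text \<open>Polytopal map with underlying graph (V,E), given combinatorially by its set F of faces,
  each face being represented by the edge set of its boundary cycle. Conditions:
  every face boundary is a cycle of the graph; every edge lies on exactly two faces; and
  the faces around every vertex form a single rotation (the vertex link is connected),
  so that gluing discs along the face boundaries yields a closed surface.\<close>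

definition polytopal_map :: "'v set \<Rightarrow> 'v set set \<Rightarrow> 'v set set set \<Rightarrow> bool" where
  "polytopal_map V E F \<longleftrightarrow>
     simple_graph V E \<and> graph_connected V E \<and>
     (\<forall>f\<in>F. f \<subseteq> E \<and> is_cycle_edges f) \<and>
     (\<forall>e\<in>E. card {f\<in>F. e \<in> f} = 2) \<and>
     (\<forall>v\<in>V. \<forall>e\<in>E. \<forall>e'\<in>E. v \<in> e \<and> v \<in> e' \<longrightarrow>
        (e, e') \<in> {(d, d'). v \<in> d \<and> v \<in> d' \<and> (\<exists>f\<in>F. d \<in> f \<and> d' \<in> f)}\<^sup>*)"

definition flags :: "'v set set set \<Rightarrow> ('v \<times> 'v set \<times> 'v set set) set" where
  "flags F = {(v, e, f). f \<in> F \<and> e \<in> f \<and> v \<in> e}"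

definition map_aut :: "'v set \<Rightarrow> 'v set set \<Rightarrow> 'v set set set \<Rightarrow> ('v \<Rightarrow> 'v) \<Rightarrow> bool" where
  "map_aut V E F \<sigma> \<longleftrightarrow> bij_betw \<sigma> V V \<and>
     (\<forall>u\<in>V. \<forall>v\<in>V. {u, v} \<in> E \<longleftrightarrow> {\<sigma> u, \<sigma> v} \<in> E) \<and>
     (\<lambda>f. (\<lambda>e. \<sigma> ` e) ` f) ` F = F"

definition flag_act :: "('v \<Rightarrow> 'v) \<Rightarrow> 'v \<times> 'v set \<times> 'v set set \<Rightarrow> 'v \<times> 'v set \<times> 'v set set" where
  "flag_act \<sigma> \<Phi> = (case \<Phi> of (v, e, f) \<Rightarrow> (\<sigma> v, \<sigma> ` e, (\<lambda>d. \<sigma> ` d) ` f))"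

definition flag_orbit :: "'v set \<Rightarrow> 'v set set \<Rightarrow> 'v set set set \<Rightarrow> 'v \<times> 'v set \<times> 'v set set
    \<Rightarrow> ('v \<times> 'v set \<times> 'v set set) set" where
  "flag_orbit V E F \<Phi> = {flag_act \<sigma> \<Phi> | \<sigma>. map_aut V E F \<sigma>}"

text \<open>Class 2_{0,1}: exactly two flag orbits; the 0- and 1-adjacent flags of any flag lie in
  its orbit, the 2-adjacent flag does not. The i-adjacent flag is the flag differing exactly in
  the vertex / edge / face component.\<close>

definition class_2_01 :: "'v set \<Rightarrow> 'v set set \<Rightarrow> 'v set set set \<Rightarrow> bool" where
  "class_2_01 V E F \<longleftrightarrow>
     card (flag_orbit V E F ` flags F) = 2 \<and>
     (\<forall>v e f. (v, e, f) \<in> flags F \<longrightarrow>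
        (\<forall>v'. (v', e, f) \<in> flags F \<and> v' \<noteq> v \<longrightarrow> (v', e, f) \<in> flag_orbit V E F (v, e, f)) \<and>
        (\<forall>e'. (v, e', f) \<in> flags F \<and> e' \<noteq> e \<longrightarrow> (v, e', f) \<in> flag_orbit V E F (v, e, f)) \<and>
        (\<forall>f'. (v, e, f') \<in> flags F \<and> f' \<noteq> f \<longrightarrow> (v, e, f') \<notin> flag_orbit V E F (v, e, f)))"

end

theory Submission
  imports Defs
begin

lemma cyc_obtain:
  assumes "is_cycle_edges f"
  obtains vs where "distinct vs" "length vs \<ge> 3"
    "f = {{vs ! i, vs ! ((i + 1) mod length vs)} | i. i < length vs}"
  using assms unfolding is_cycle_edges_def by blast

lemma cyc_edge:
  assumes "is_cycle_edges f" "e \<in> f"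
  shows "\<exists>p q. p \<noteq> q \<and> e = {p, q}"
proof -
  obtain vs where d: "distinct vs" "length vs \<ge> 3"
    and f: "f = {{vs ! i, vs ! ((i + 1) mod length vs)} | i. i < length vs}"
    using cyc_obtain[OF assms(1)] by blast
  from assms(2) f obtain i where i: "i < length vs" "e = {vs ! i, vs ! ((i + 1) mod length vs)}" by blast
  have ne: "(i + 1) mod length vs \<noteq> i"
  proof
    assume h: "(i + 1) mod length vs = i"
    show False
    proof (cases "i + 1 < length vs")
      case True then show ?thesis using h by simp
    next
      case False then have "i + 1 = length vs" using i by simp
      then show ?thesis using h d by simp
    qed
  qed
  have "vs ! i \<noteq> vs ! ((i + 1) mod length vs)"
  proof -
    have "0 < length vs" using i by linarith
    then have "Suc i mod length vs < length vs" by simp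
    then show ?thesis using d i ne by (subst nth_eq_iff_index_eq) auto
  qed
  then show ?thesis using i by blast
qed

lemma suc_mod_inj:
  fixes i i' L :: nat
  assumes "i < L" "i' < L" "(i + 1) mod L = (i' + 1) mod L"
  shows "i = i'"
proof (cases "i + 1 = L")
  case True
  then have "(i' + 1) mod L = 0" using assms(3) by simp
  then have "i' + 1 = L" using assms(2)
    by (metis Suc_eq_plus1 Suc_leI le_neq_implies_less mod_less nat.distinct(1))
  then show ?thesis using True by simp
next
  case False
  then have a: "(i + 1) mod L = i + 1" using assms(1) by simp
  show ?thesis
  proof (cases "i' + 1 = L")
    case True
    then show ?thesis using a assms(3) by simp
  next
    case False
    then show ?thesis using a assms by simp
  qed
qed

lemma cyc_three:
  assumes "is_cycle_edges f" "e1 \<in> f" "e2 \<in> f" "e3 \<in> f" "x \<in> e1" "x \<in> e2" "x \<in> e3"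
  shows "e1 = e2 \<or> e1 = e3 \<or> e2 = e3"
proof -
  obtain vs where d: "distinct vs" "length vs \<ge> 3"
    and f: "f = {{vs ! i, vs ! ((i + 1) mod length vs)} | i. i < length vs}"
    using cyc_obtain[OF assms(1)] by blast
  define L where "L = length vs"
  have key: "\<exists>i<L. e = {vs ! i, vs ! ((i + 1) mod L)} \<and> (x = vs ! i \<or> x = vs ! ((i + 1) mod L))"
    if "e \<in> f" "x \<in> e" for e
    using that f unfolding L_def by blast
  obtain j where j: "j < L" "x = vs ! j"
    using key[OF assms(2,5)] L_def d by (metis mod_less_divisor le_trans not_less_eq_eq le_less numeral_3_eq_3 zero_less_Suc)
  have idx: "i < L \<Longrightarrow> vs ! i = x \<Longrightarrow> i = j" for i
    using j d unfolding L_def by (simp add: nth_eq_iff_index_eq)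
  have Lpos: "L > 0" using d unfolding L_def by linarith
  have cls: "e = {vs ! j, vs ! ((j + 1) mod L)} \<or> (\<exists>i<L. (i + 1) mod L = j \<and> e = {vs ! i, vs ! j})"
    if ee: "e \<in> f" "x \<in> e" for e
  proof -
    obtain i where i: "i < L" "e = {vs ! i, vs ! ((i + 1) mod L)}" "x = vs ! i \<or> x = vs ! ((i + 1) mod L)"
      using key[OF ee] by blast
    show ?thesis
    proof (cases "x = vs ! i")
      case True then have "i = j" using idx i by simp
      then show ?thesis using i by simp
    next
      case False then have "x = vs ! ((i + 1) mod L)" using i by simp
      then have "(i + 1) mod L = j" using idx Lpos by simp
      then show ?thesis using i by auto
    qed
  qed
  have uniq: "e = e'" if "\<exists>i<L. (i + 1) mod L = j \<and> e = {vs ! i, vs ! j}"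
      "\<exists>i<L. (i + 1) mod L = j \<and> e' = {vs ! i, vs ! j}" for e e'
  proof -
    note th = that
    obtain i where i: "i < L" "(i + 1) mod L = j" "e = {vs ! i, vs ! j}" using th(1) by blast
    obtain i' where i': "i' < L" "(i' + 1) mod L = j" "e' = {vs ! i', vs ! j}" using th(2) by blast
    have "(i + 1) mod L = (i' + 1) mod L" using i i' by simp
    then have "i = i'"
      using i(1) i'(1) by (rule suc_mod_inj[rotated -1])
    then show ?thesis using i i' by simp
  qed
  define T where "T e \<longleftrightarrow> (\<exists>i<L. (i + 1) mod L = j \<and> e = {vs ! i, vs ! j})" for e
  have c1: "e1 = {vs ! j, vs ! ((j + 1) mod L)} \<or> T e1" using cls[OF assms(2,5)] T_def by simp
  have c2: "e2 = {vs ! j, vs ! ((j + 1) mod L)} \<or> T e2" using cls[OF assms(3,6)] T_def by simp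
  have c3: "e3 = {vs ! j, vs ! ((j + 1) mod L)} \<or> T e3" using cls[OF assms(4,7)] T_def by simp
  have u: "T e \<Longrightarrow> T e' \<Longrightarrow> e = e'" for e e' using uniq unfolding T_def by blast
  show ?thesis
  proof (cases "T e1")
    case True
    then show ?thesis using c2 c3 u by (cases "T e2") auto
  next
    case False
    then show ?thesis using c1 c2 c3 u by (cases "T e2") auto
  qed
qed

lemma mod_step_ne:
  fixes i L :: nat
  assumes "i < L" "L \<ge> 3"
  shows "(i + 1) mod L \<noteq> i" "(i + 2) mod L \<noteq> i" "((i + 1) mod L + 1) mod L = (i + 2) mod L"
proof -
  show "(i + 1) mod L \<noteq> i"
    using assms by (cases "i + 1 < L") (auto simp: le_mod_geq)
  show "(i + 2) mod L \<noteq> i"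
  proof (cases "i + 2 < L")
    case True then show ?thesis by simp
  next
    case False
    then have "(i + 2) mod L = (i + 2 - L) mod L" by (simp add: le_mod_geq)
    also have "\<dots> = i + 2 - L" using assms by simp
    finally have "(i + 2) mod L = i + 2 - L" .
    moreover have "i + 2 - L \<noteq> i" using assms False by arith
    ultimately show ?thesis by simp
  qed
  show "((i + 1) mod L + 1) mod L = (i + 2) mod L"
    by (simp add: mod_Suc_eq)
qed

lemma cyc_two:
  assumes "is_cycle_edges f" "x \<in> \<Union> f"
  shows "\<exists>e1\<in>f. \<exists>e2\<in>f. e1 \<noteq> e2 \<and> x \<in> e1 \<and> x \<in> e2"
proof -
  obtain vs where d: "distinct vs" "length vs \<ge> 3"
    and f: "f = {{vs ! i, vs ! ((i + 1) mod length vs)} | i. i < length vs}"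
    using cyc_obtain[OF assms(1)] by blast
  define L where "L = length vs"
  have L3: "L \<ge> 3" using d L_def by simp
  obtain e where ee: "e \<in> f" "x \<in> e" using assms(2) by blast
  obtain j where j0: "j < L" "e = {vs ! j, vs ! ((j + 1) mod L)}" using ee(1) f L_def by blast
  have j: "j < L" "x = vs ! j \<or> x = vs ! ((j + 1) mod L)" using j0 ee(2) by auto
  obtain m where m: "m < L" "x = vs ! m"
  proof (cases "x = vs ! j")
    case True then show ?thesis using that j by blast
  next
    case False then show ?thesis using that[of "(j + 1) mod L"] j L3 by simp
  qed
  define i where "i = (m + (L - 1)) mod L"
  have iL: "i < L" using L3 i_def by simp
  have im: "(i + 1) mod L = m"
  proof -
    have "(i + 1) mod L = (m + (L - 1) + 1) mod L" unfolding i_def by (simp add: mod_Suc_eq)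
    also have "m + (L - 1) + 1 = m + L" using L3 by simp
    finally show ?thesis using m by simp
  qed
  have allE: "\<And>k. k < L \<Longrightarrow> {vs ! k, vs ! ((k + 1) mod L)} \<in> f" using f L_def by blast
  have e1: "{vs ! m, vs ! ((m + 1) mod L)} \<in> f" using allE m by simp
  have "{vs ! i, vs ! ((i + 1) mod L)} \<in> f" using allE iL by simp
  then have e2: "{vs ! i, vs ! m} \<in> f" using im by simp
  have ne: "{vs ! m, vs ! ((m + 1) mod L)} \<noteq> {vs ! i, vs ! m}"
  proof
    assume h: "{vs ! m, vs ! ((m + 1) mod L)} = {vs ! i, vs ! m}"
    have "vs ! ((m + 1) mod L) = vs ! i \<or> vs ! ((m + 1) mod L) = vs ! m"
      using h unfolding doubleton_eq_iff by auto
    moreover have "(m + 1) mod L < L" using L3 by simp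
    ultimately have "(m + 1) mod L = i \<or> (m + 1) mod L = m"
      using nth_eq_iff_index_eq[OF d(1)] iL m unfolding L_def by metis
    moreover have "(m + 1) mod L \<noteq> m" using mod_step_ne(1)[OF m(1) L3] .
    moreover have "(i + 2) mod L \<noteq> i" using mod_step_ne(2)[OF iL L3] .
    moreover have "(m + 1) mod L = (i + 2) mod L" using mod_step_ne(3)[OF iL L3] im by simp
    ultimately show False by simp
  qed
  show ?thesis
    apply (rule bexI[OF _ e1])
    apply (rule bexI[OF _ e2])
    using ne m by simp
qed

lemma cyc_closed:
  assumes "is_cycle_edges f" "x0 \<in> S" "x0 \<in> \<Union> f"
    and cl: "\<And>e x. e \<in> f \<Longrightarrow> x \<in> e \<Longrightarrow> x \<in> S \<Longrightarrow> e \<subseteq> S"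
  shows "\<Union> f \<subseteq> S"
proof -
  obtain vs where d: "distinct vs" "length vs \<ge> 3"
    and f: "f = {{vs ! i, vs ! ((i + 1) mod length vs)} | i. i < length vs}"
    using cyc_obtain[OF assms(1)] by blast
  define L where "L = length vs"
  have L3: "L \<ge> 3" using d L_def by simp
  obtain e where ee: "e \<in> f" "x0 \<in> e" using assms(3) by blast
  obtain j where j0: "j < L" "e = {vs ! j, vs ! ((j + 1) mod L)}" using ee(1) f L_def by blast
  have j: "j < L" "x0 = vs ! j \<or> x0 = vs ! ((j + 1) mod L)" using j0 ee(2) by auto
  obtain m where m: "m < L" "vs ! m \<in> S"
  proof (cases "x0 = vs ! j")
    case True then show ?thesis using that j assms(2) by blast
  next
    case False then show ?thesis using that[of "(j + 1) mod L"] j L3 assms(2) by simp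
  qed
  have step: "vs ! ((m + k) mod L) \<in> S" for k
  proof (induction k)
    case 0 then show ?case using m by simp
  next
    case (Suc k)
    have lt: "(m + k) mod L < L" using L3 by simp
    have "{vs ! ((m + k) mod L), vs ! (((m + k) mod L + 1) mod L)} \<in> f"
      using f lt L_def by auto
    then have "vs ! (((m + k) mod L + 1) mod L) \<in> S" using cl Suc by blast
    then show ?case by (simp add: mod_Suc_eq)
  qed
  have all: "vs ! i \<in> S" if "i < L" for i
  proof -
    have "(m + (i + L - m)) mod L = i" using that m(1) by simp
    then show ?thesis using step[of "i + L - m"] by simp
  qed
  show ?thesis
  proof
    fix x assume "x \<in> \<Union> f"
    then obtain e where ee: "e \<in> f" "x \<in> e" by blast
    obtain i where i0: "i < L" "e = {vs ! i, vs ! ((i + 1) mod L)}" using ee(1) f L_def by blast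
    have "(i + 1) mod L < L" using L3 by simp
    then show "x \<in> S" using all i0 ee(2) by auto
  qed
qed

lemma cyc_card:
  assumes "is_cycle_edges f"
  shows "finite f" "card f = card (\<Union> f)"
proof -
  obtain vs where d: "distinct vs" "length vs \<ge> 3"
    and f: "f = {{vs ! i, vs ! ((i + 1) mod length vs)} | i. i < length vs}"
    using cyc_obtain[OF assms(1)] by blast
  define L where "L = length vs"
  have L3: "L \<ge> 3" using d L_def by simp
  define h where "h i = {vs ! i, vs ! ((i + 1) mod L)}" for i
  have fh: "f = h ` {..<L}" using f unfolding h_def L_def by auto
  show "finite f" using fh by simp
  have inj: "inj_on h {..<L}"
  proof
    fix i j assume i: "i \<in> {..<L}" and j: "j \<in> {..<L}" and hij: "h i = h j"
    have il: "i < L" "(i + 1) mod L < L" and jl: "j < L" "(j + 1) mod L < L" using i j L3 by auto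
    have nth: "a < L \<Longrightarrow> b < L \<Longrightarrow> vs ! a = vs ! b \<longleftrightarrow> a = b" for a b
      using d L_def by (simp add: nth_eq_iff_index_eq)
    show "i = j"
    proof (rule ccontr)
      assume "i \<noteq> j"
      have "vs ! i \<noteq> vs ! j" using nth il jl \<open>i \<noteq> j\<close> by simp
      moreover have "(vs ! i = vs ! j \<and> vs ! ((i + 1) mod L) = vs ! ((j + 1) mod L)) \<or>
          (vs ! i = vs ! ((j + 1) mod L) \<and> vs ! ((i + 1) mod L) = vs ! j)"
        using hij unfolding h_def doubleton_eq_iff .
      ultimately have "vs ! i = vs ! ((j + 1) mod L) \<and> vs ! ((i + 1) mod L) = vs ! j" by blast
      then have "i = (j + 1) mod L" "(i + 1) mod L = j" using nth il jl by auto
      then have "(i + 2) mod L = i" using mod_step_ne(3)[OF il(1) L3] by simp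
      then show False using mod_step_ne(2)[OF il(1) L3] by simp
    qed
  qed
  have "card f = L" using fh inj by (simp add: card_image)
  moreover have "\<Union> f = set vs"
  proof
    show "\<Union> f \<subseteq> set vs"
    proof
      fix x assume "x \<in> \<Union> f"
      then obtain e where ee: "e \<in> f" "x \<in> e" by blast
      obtain i where i0: "i < L" "e = {vs ! i, vs ! ((i + 1) mod L)}" using ee(1) f L_def by blast
      have i: "i < L" "x = vs ! i \<or> x = vs ! ((i + 1) mod L)" using i0 ee(2) by auto
      have "(i + 1) mod L < L" using L3 by simp
      then show "x \<in> set vs" using i L_def by auto
    qed
    show "set vs \<subseteq> \<Union> f"
    proof
      fix x assume "x \<in> set vs"
      then obtain i where "i < L" "x = vs ! i" using L_def by (auto simp: in_set_conv_nth)
      then show "x \<in> \<Union> f" using fh h_def by auto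
    qed
  qed
  moreover have "card (set vs) = L" using d L_def by (simp add: distinct_card)
  ultimately show "card f = card (\<Union> f)" by simp
qed

locale RW =
  fixes n :: nat and F :: "(bool \<times> nat) set set set"
  assumes n3: "n \<ge> 3" and n4: "n \<noteq> 4"
    and pm: "polytopal_map (rose_V n) (rose_E n 2 1) F"
    and c2: "class_2_01 (rose_V n) (rose_E n 2 1) F"
begin

abbreviation "V \<equiv> rose_V n"
abbreviation "E \<equiv> rose_E n 2 1"

definition bl :: "bool \<times> nat \<Rightarrow> int" where
  "bl x = (if fst x then int (snd x) else (int (snd x) - 1) mod int n)"

definition tw :: "bool \<times> nat \<Rightarrow> bool \<times> nat" where
  "tw x = (if fst x then (False, (snd x + 1) mod n) else (True, (snd x + n - 1) mod n))"

definition up :: "bool \<times> nat \<Rightarrow> bool \<times> nat \<Rightarrow> bool" where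
  "up x y \<longleftrightarrow> bl y = (bl x + 1) mod int n"

lemma npos: "n > 0" using n3 by simp

lemma inV: "x \<in> V \<longleftrightarrow> snd x < n"
  unfolding rose_V_def by (cases x) auto

lemma bl_range: "0 \<le> bl x" "bl x < int n" if "x \<in> V"
  using that npos unfolding bl_def inV by auto

lemma tw_V: "x \<in> V \<Longrightarrow> tw x \<in> V"
  unfolding tw_def inV using npos by auto

lemma tw_tw: "x \<in> V \<Longrightarrow> tw (tw x) = x"
proof -
  assume "x \<in> V"
  then have i: "snd x < n" by (simp add: inV)
  obtain b i0 where x: "x = (b, i0)" by (cases x)
  show ?thesis
  proof (cases b)
    case True
    then show ?thesis using i x n3
      by (cases "i0 + 1 < n") (auto simp: tw_def le_mod_geq)
  next
    case False
    then show ?thesis using i x n3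
      by (cases "i0 = 0") (auto simp: tw_def mod_Suc_eq le_mod_geq)
  qed
qed

lemma tw_ne: "tw x \<noteq> x"
  unfolding tw_def by (cases x) auto

lemma bl_tw: "x \<in> V \<Longrightarrow> bl (tw x) = bl x"
proof -
  assume "x \<in> V"
  then have i: "snd x < n" by (simp add: inV)
  obtain b i0 where x: "x = (b, i0)" by (cases x)
  show ?thesis
  proof (cases b)
    case True
    have "bl (tw x) = (int ((i0 + 1) mod n) - 1) mod int n" using x True by (simp add: bl_def tw_def)
    also have "\<dots> = (int (i0 + 1) - 1) mod int n" by (simp add: of_nat_mod mod_diff_left_eq add.commute)
    also have "\<dots> = int i0" using i x by simp
    finally show ?thesis using x True by (simp add: bl_def)
  next
    case False
    have "bl (tw x) = int ((i0 + n - 1) mod n)" using x False by (simp add: bl_def tw_def)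
    also have "\<dots> = int (i0 + n - 1) mod int n" by (simp add: of_nat_mod)
    also have "int (i0 + n - 1) = int i0 - 1 + int n" using n3 by simp
    also have "(int i0 - 1 + int n) mod int n = (int i0 - 1) mod int n" by simp
    finally show ?thesis using x False by (simp add: bl_def)
  qed
qed

lemma int_dvd_small:
  fixes d :: int
  assumes "int n dvd d" "- int n < d" "d < int n"
  shows "d = 0"
proof -
  obtain k where k: "d = int n * k" using assms(1) by (auto elim: dvdE)
  show ?thesis
  proof (cases "k = 0")
    case True then show ?thesis using k by simp
  next
    case False
    then have "k \<ge> 1 \<or> k \<le> -1" by linarith
    then show ?thesis
    proof
      assume "k \<ge> 1"
      then have "int n * k \<ge> int n * 1" using npos by (intro mult_left_mono) auto
      then show ?thesis using k assms by linarith
    next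
      assume "k \<le> -1"
      then have "int n * k \<le> int n * (-1)" using npos by (intro mult_left_mono) auto
      then show ?thesis using k assms by linarith
    qed
  qed
qed

lemma fst_bl_det:
  assumes "x \<in> V" "y \<in> V" "fst x = fst y" "bl x = bl y"
  shows "x = y"
proof -
  obtain b i where x: "x = (b, i)" by (cases x)
  obtain j where y: "y = (b, j)" using assms(3) x by (cases y) auto
  have i: "i < n" and j: "j < n" using assms(1,2) x y by (auto simp: inV)
  show ?thesis
  proof (cases b)
    case True then show ?thesis using assms(4) x y by (simp add: bl_def)
  next
    case False
    then have "(int i - 1) mod int n = (int j - 1) mod int n" using assms(4) x y by (simp add: bl_def)
    then have "int n dvd ((int i - 1) - (int j - 1))" by (simp add: mod_eq_dvd_iff)
    then have "int n dvd (int i - int j)" by simp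
    then have "int i - int j = 0" using i j by (intro int_dvd_small) auto
    then show ?thesis using x y by simp
  qed
qed

lemma fst_tw: "fst (tw x) = (\<not> fst x)"
  unfolding tw_def by auto

lemma bl_eq:
  assumes "x \<in> V" "y \<in> V" "bl x = bl y"
  shows "y = x \<or> y = tw x"
proof (cases "fst y = fst x")
  case True then show ?thesis using fst_bl_det assms by metis
next
  case False
  then have "fst y = fst (tw x)" by (simp add: fst_tw)
  moreover have "bl y = bl (tw x)" using bl_tw assms by simp
  ultimately show ?thesis using fst_bl_det[OF assms(2) tw_V[OF assms(1)]] by simp
qed

lemma bl_mod: "x \<in> V \<Longrightarrow> bl x mod int n = bl x"
  using bl_range by simp

definition upF :: "bool \<times> nat \<Rightarrow> bool \<times> nat" where
  "upF x = (if fst x then (False, (snd x + 2) mod n) else (False, (snd x + 1) mod n))"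
definition upT :: "bool \<times> nat \<Rightarrow> bool \<times> nat" where
  "upT x = (if fst x then (True, (snd x + 1) mod n) else (True, snd x))"

lemma upF_V: "x \<in> V \<Longrightarrow> upF x \<in> V" unfolding upF_def inV using npos by auto
lemma upT_V: "x \<in> V \<Longrightarrow> upT x \<in> V" unfolding upT_def inV using npos by auto

lemma up_upF: "x \<in> V \<Longrightarrow> up x (upF x)"
proof -
  assume xV: "x \<in> V"
  obtain b i where x: "x = (b, i)" by (cases x)
  have i: "i < n" using xV x by (simp add: inV)
  show ?thesis
  proof (cases b)
    case True
    have "bl (upF x) = (int ((i + 2) mod n) - 1) mod int n" using x True by (simp add: bl_def upF_def)
    also have "\<dots> = (int i + 1) mod int n" by (simp add: of_nat_mod mod_diff_left_eq add.commute)
    finally show ?thesis using x True by (simp add: up_def bl_def)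
  next
    case False
    have "bl (upF x) = (int ((i + 1) mod n) - 1) mod int n" using x False by (simp add: bl_def upF_def)
    also have "\<dots> = int i mod int n" by (simp add: of_nat_mod mod_diff_left_eq add.commute)
    also have "\<dots> = ((int i - 1) mod int n + 1) mod int n" by (simp add: mod_add_left_eq)
    finally show ?thesis using x False by (simp add: up_def bl_def)
  qed
qed

lemma up_upT: "x \<in> V \<Longrightarrow> up x (upT x)"
proof -
  assume xV: "x \<in> V"
  obtain b i where x: "x = (b, i)" by (cases x)
  have i: "i < n" using xV x by (simp add: inV)
  show ?thesis
  proof (cases b)
    case True
    show ?thesis using x True by (simp add: up_def bl_def upT_def of_nat_mod add.commute)
  next
    case False
    have "bl (upT x) = int i mod int n" using x False i by (simp add: bl_def upT_def)
    also have "\<dots> = ((int i - 1) mod int n + 1) mod int n" by (simp add: mod_add_left_eq)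
    finally show ?thesis using x False by (simp add: up_def bl_def)
  qed
qed

lemma edge_upF: "x \<in> V \<Longrightarrow> {x, upF x} \<in> E"
proof -
  assume xV: "x \<in> V"
  obtain b i where x: "x = (b, i)" by (cases x)
  have i: "i < n" using xV x by (simp add: inV)
  show ?thesis
  proof (cases b)
    case True
    define j where "j = (i + 2) mod n"
    have j: "j < n" using npos j_def by simp
    have "(j + n - 2) mod n = i"
    proof -
      have "int ((j + n - 2) mod n) = int (j + n - 2) mod int n" by (simp add: of_nat_mod)
      also have "int (j + n - 2) = int j + (int n - 2)" using n3 by simp
      also have "int j = (int i + 2) mod int n" unfolding j_def by (simp add: of_nat_mod add.commute)
      also have "((int i + 2) mod int n + (int n - 2)) mod int n = (int i + 2 + (int n - 2)) mod int n"
        by (rule mod_add_left_eq)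
      also have "int i + 2 + (int n - 2) = int i + int n" by simp
      also have "(int i + int n) mod int n = int i" using i by simp
      finally show ?thesis by simp
    qed
    then have "{(False, j), (True, (j + n - 2) mod n)} \<in> E"
      unfolding rose_E_def using j by auto
    then show ?thesis using x True \<open>(j + n - 2) mod n = i\<close> j_def
      by (simp add: upF_def insert_commute)
  next
    case False
    have "{(False, i), (False, (i + 1) mod n)} \<in> E" unfolding rose_E_def using i by auto
    then show ?thesis using x False by (simp add: upF_def)
  qed
qed

lemma edge_upT: "x \<in> V \<Longrightarrow> {x, upT x} \<in> E"
proof -
  assume xV: "x \<in> V"
  obtain b i where x: "x = (b, i)" by (cases x)
  have i: "i < n" using xV x by (simp add: inV)
  show ?thesis
  proof (cases b)
    case True
    have "{(True, i), (True, (i + 1) mod n)} \<in> E" unfolding rose_E_def using i by auto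
    then show ?thesis using x True by (simp add: upT_def)
  next
    case False
    have "{(False, i), (True, i)} \<in> E" unfolding rose_E_def using i by auto
    then show ?thesis using x False by (simp add: upT_def)
  qed
qed

lemma fst_upF: "fst (upF x) = False" unfolding upF_def by auto
lemma fst_upT: "fst (upT x) = True" unfolding upT_def by auto

lemma up_cases:
  assumes "x \<in> V" "y \<in> V" "up x y"
  shows "y = upF x \<or> y = upT x"
proof -
  have "bl y = bl (upF x)" "bl y = bl (upT x)"
    using assms up_upF up_upT unfolding up_def by auto
  then show ?thesis
    using fst_bl_det[OF assms(2) upF_V[OF assms(1)]] fst_bl_det[OF assms(2) upT_V[OF assms(1)]]
      fst_upF fst_upT by (cases "fst y") auto
qed

lemma up_edge: "x \<in> V \<Longrightarrow> y \<in> V \<Longrightarrow> up x y \<Longrightarrow> {x, y} \<in> E"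
  using up_cases edge_upF edge_upT by blast

lemma E_cases:
  assumes "e \<in> E"
  shows "\<exists>x y. x \<in> V \<and> y \<in> V \<and> up x y \<and> e = {x, y}"
proof -
  obtain i where i: "i < n" and e: "e = {(False, i), (False, (i + 1) mod n)} \<or>
      e = {(True, i), (True, (i + 1) mod n)} \<or> e = {(False, i), (True, i)} \<or>
      e = {(False, i), (True, (i + n - 2) mod n)}"
    using assms unfolding rose_E_def by auto
  have xF: "(False, i) \<in> V" and xT: "(True, i) \<in> V" using i by (auto simp: inV)
  consider (a) "e = {(False, i), (False, (i + 1) mod n)}" | (b) "e = {(True, i), (True, (i + 1) mod n)}"
    | (c) "e = {(False, i), (True, i)}" | (d) "e = {(False, i), (True, (i + n - 2) mod n)}"
    using e by blast
  then show ?thesis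
  proof cases
    case a
    then have "e = {(False, i), upF (False, i)}" by (simp add: upF_def)
    then show ?thesis using xF upF_V up_upF by blast
  next
    case b
    then have "e = {(True, i), upT (True, i)}" by (simp add: upT_def)
    then show ?thesis using xT upT_V up_upT by blast
  next
    case c
    then have "e = {(False, i), upT (False, i)}" by (simp add: upT_def)
    then show ?thesis using xF upT_V up_upT by blast
  next
    case d
    define y where "y = (True, (i + n - 2) mod n)"
    have yV: "y \<in> V" using npos by (simp add: y_def inV)
    have "((i + n - 2) mod n + 2) mod n = i"
    proof -
      have "int (((i + n - 2) mod n + 2) mod n) = (int ((i + n - 2) mod n) + 2) mod int n"
        by (simp add: of_nat_mod add.commute)
      also have "int ((i + n - 2) mod n) = (int i + (int n - 2)) mod int n" using n3
        by (simp add: of_nat_mod of_nat_diff add_diff_eq)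
      also have "((int i + (int n - 2)) mod int n + 2) mod int n = (int i + (int n - 2) + 2) mod int n"
        by (rule mod_add_left_eq)
      also have "int i + (int n - 2) + 2 = int i + int n" by simp
      also have "(int i + int n) mod int n = int i" using i by simp
      finally show ?thesis by simp
    qed
    then have "upF y = (False, i)" by (simp add: upF_def y_def)
    then have "e = {y, upF y}" using d y_def by auto
    then show ?thesis using yV upF_V up_upF by blast
  qed
qed

definition adj :: "bool \<times> nat \<Rightarrow> bool \<times> nat \<Rightarrow> bool" where
  "adj x y \<longleftrightarrow> up x y \<or> up y x"

lemma edge_iff:
  assumes "x \<in> V" "y \<in> V"
  shows "{x, y} \<in> E \<longleftrightarrow> adj x y"
proof
  assume "{x, y} \<in> E"
  then obtain x' y' where "x' \<in> V" "y' \<in> V" "up x' y'" "{x, y} = {x', y'}" using E_cases by blast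
  then show "adj x y" unfolding adj_def doubleton_eq_iff by auto
next
  assume "adj x y"
  then show "{x, y} \<in> E" using up_edge[OF assms] up_edge[OF assms(2,1)] unfolding adj_def
    by (metis insert_commute)
qed

lemma E_sub: "e \<in> E \<Longrightarrow> \<exists>x y. x \<in> V \<and> y \<in> V \<and> adj x y \<and> e = {x, y}"
  using E_cases adj_def by blast

lemma not_up_self: "x \<in> V \<Longrightarrow> \<not> up x x"
proof
  assume xV: "x \<in> V" and u: "up x x"
  have r: "0 \<le> bl x" "bl x < int n" using bl_range xV by auto
  show False
  proof (cases "bl x + 1 < int n")
    case True then show False using u r by (simp add: up_def)
  next
    case False then have "bl x + 1 = int n" using r by simp
    then show False using u r n3 by (simp add: up_def)
  qed
qed

lemma adj_ne: "x \<in> V \<Longrightarrow> adj x y \<Longrightarrow> x \<noteq> y"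
  using not_up_self[of x] unfolding adj_def by blast

lemma up_mod: "up x y \<longleftrightarrow> bl y = (bl x + 1) mod int n" by (simp add: up_def)

lemma up_dvd: "x \<in> V \<Longrightarrow> y \<in> V \<Longrightarrow> up x y \<longleftrightarrow> int n dvd (bl y - bl x - 1)"
proof -
  assume xV: "x \<in> V" and yV: "y \<in> V"
  have "up x y \<longleftrightarrow> bl y mod int n = (bl x + 1) mod int n"
    using bl_mod[OF yV] up_def by simp
  also have "\<dots> \<longleftrightarrow> int n dvd (bl y - (bl x + 1))" by (simp add: mod_eq_dvd_iff)
  finally show ?thesis by (simp add: algebra_simps)
qed

lemma same_dvd: "x \<in> V \<Longrightarrow> y \<in> V \<Longrightarrow> bl x = bl y \<longleftrightarrow> int n dvd (bl y - bl x)"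
proof -
  assume xV: "x \<in> V" and yV: "y \<in> V"
  have "bl x = bl y \<longleftrightarrow> bl y mod int n = bl x mod int n"
    using bl_mod[OF yV] bl_mod[OF xV] by auto
  also have "\<dots> \<longleftrightarrow> int n dvd (bl y - bl x)" by (simp add: mod_eq_dvd_iff)
  finally show ?thesis .
qed

lemma ndvd_small: "\<not> int n dvd 1" "\<not> int n dvd 2" "\<not> int n dvd 4" "\<not> int n dvd -1" "\<not> int n dvd -2"
  "\<not> int n dvd -4" "int n dvd 3 \<Longrightarrow> n = 3" "int n dvd -3 \<Longrightarrow> n = 3"
proof -
  have a: "int n dvd k \<Longrightarrow> 0 < k \<Longrightarrow> int n \<le> k" for k :: int by (rule zdvd_imp_le)
  show "\<not> int n dvd 1" using a[of 1] n3 by auto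
  show "\<not> int n dvd 2" using a[of 2] n3 by auto
  show "\<not> int n dvd -1" using a[of 1] n3 by auto
  show "\<not> int n dvd -2" using a[of 2] n3 by auto
  show "\<not> int n dvd 4"
  proof
    assume "int n dvd 4"
    then have "int n \<le> 4" using a[of 4] by simp
    then have "n = 3 \<or> n = 4" using n3 by linarith
    then show False using n4 \<open>int n dvd 4\<close> by auto
  qed
  then show "\<not> int n dvd -4" by simp
  show "int n dvd 3 \<Longrightarrow> n = 3" using a[of 3] n3 by auto
  show "int n dvd -3 \<Longrightarrow> n = 3" using a[of 3] n3 by auto
qed

lemma up_up_not: "x \<in> V \<Longrightarrow> y \<in> V \<Longrightarrow> up x y \<Longrightarrow> \<not> up y x"
proof
  assume xV: "x \<in> V" and yV: "y \<in> V" and u1: "up x y" and u2: "up y x"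
  have "int n dvd (bl y - bl x - 1)" "int n dvd (bl x - bl y - 1)" using u1 u2 up_dvd xV yV by auto
  then have "int n dvd ((bl y - bl x - 1) + (bl x - bl y - 1))" by (rule dvd_add)
  then show False using ndvd_small by simp
qed

lemma up_twin: "x \<in> V \<Longrightarrow> y \<in> V \<Longrightarrow> up x y \<Longrightarrow> up x (tw y) \<and> up (tw x) y"
  using bl_tw unfolding up_def by auto

lemma adj_twin: "x \<in> V \<Longrightarrow> y \<in> V \<Longrightarrow> adj x y \<Longrightarrow> adj x (tw y) \<and> adj (tw x) y"
  using bl_tw unfolding adj_def up_def by auto

lemma up_same: "x \<in> V \<Longrightarrow> y \<in> V \<Longrightarrow> z \<in> V \<Longrightarrow> up x y \<Longrightarrow> up x z \<Longrightarrow> z = y \<or> z = tw y"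
  using bl_eq unfolding up_def by auto

lemma up_same2: "x \<in> V \<Longrightarrow> y \<in> V \<Longrightarrow> z \<in> V \<Longrightarrow> up y x \<Longrightarrow> up z x \<Longrightarrow> z = y \<or> z = tw y"
proof -
  assume a: "x \<in> V" "y \<in> V" "z \<in> V" "up y x" "up z x"
  then have "int n dvd (bl x - bl y - 1)" "int n dvd (bl x - bl z - 1)" using up_dvd by auto
  then have "int n dvd ((bl x - bl y - 1) - (bl x - bl z - 1))" by (rule dvd_diff)
  then have "int n dvd (bl z - bl y)" by (simp add: algebra_simps)
  then have "bl y = bl z" using same_dvd a by simp
  then show ?thesis using bl_eq a by simp
qed

lemma tw_inj: "x \<in> V \<Longrightarrow> y \<in> V \<Longrightarrow> tw x = tw y \<Longrightarrow> x = y"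
  using tw_tw by metis

lemma not_up_twin: "x \<in> V \<Longrightarrow> \<not> up x (tw x)"
  using not_up_self bl_tw unfolding up_def by auto

lemma not_adj_same: "x \<in> V \<Longrightarrow> y \<in> V \<Longrightarrow> bl x = bl y \<Longrightarrow> \<not> adj x y"
  using not_up_self unfolding adj_def up_def by auto

end

context RW
begin

abbreviation "G \<equiv> map_aut V E F"
abbreviation "orb \<equiv> flag_orbit V E F"

definition fimg :: "(bool \<times> nat \<Rightarrow> bool \<times> nat) \<Rightarrow> (bool \<times> nat) set set \<Rightarrow> (bool \<times> nat) set set" where
  "fimg \<sigma> f = (\<lambda>e. \<sigma> ` e) ` f"

lemma pm_simple: "simple_graph V E" using pm unfolding polytopal_map_def by blast
lemma pm_conn: "graph_connected V E" using pm unfolding polytopal_map_def by blast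
lemma pm_face: "f \<in> F \<Longrightarrow> f \<subseteq> E \<and> is_cycle_edges f" using pm unfolding polytopal_map_def by blast
lemma pm_two: "e \<in> E \<Longrightarrow> card {f \<in> F. e \<in> f} = 2" using pm unfolding polytopal_map_def by blast
lemma pm_link: "v \<in> V \<Longrightarrow> e \<in> E \<Longrightarrow> e' \<in> E \<Longrightarrow> v \<in> e \<Longrightarrow> v \<in> e' \<Longrightarrow>
   (e, e') \<in> {(d, d'). v \<in> d \<and> v \<in> d' \<and> (\<exists>f\<in>F. d \<in> f \<and> d' \<in> f)}\<^sup>*"
  using pm unfolding polytopal_map_def by blast

lemma E_V: "e \<in> E \<Longrightarrow> e \<subseteq> V" using E_sub by blast
lemma F_E: "f \<in> F \<Longrightarrow> f \<subseteq> E" using pm_face by blast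
lemma F_cyc: "f \<in> F \<Longrightarrow> is_cycle_edges f" using pm_face by blast

lemma finite_E: "finite E" unfolding rose_E_def by auto
lemma finite_F: "finite F"
proof -
  have "F \<subseteq> Pow E" using F_E by auto
  then show ?thesis using finite_E by (meson finite_Pow_iff rev_finite_subset)
qed
lemma finite_V: "finite V"
proof -
  have "V \<subseteq> UNIV \<times> {..<n}" unfolding rose_V_def by auto
  then show ?thesis by (rule finite_subset) auto
qed

lemma two_faces:
  assumes "e \<in> E"
  obtains f g where "f \<in> F" "g \<in> F" "f \<noteq> g" "e \<in> f" "e \<in> g" "\<And>h. h \<in> F \<Longrightarrow> e \<in> h \<Longrightarrow> h = f \<or> h = g"
proof -
  have "card {f \<in> F. e \<in> f} = 2" using pm_two assms by simp
  then obtain f g where fg: "f \<noteq> g" "{f \<in> F. e \<in> f} = {f, g}" by (auto simp: card_2_iff)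
  have A: "h \<in> F \<and> e \<in> h \<longleftrightarrow> h = f \<or> h = g" for h
    using fg(2) by (simp add: set_eq_iff)
  show ?thesis
    apply (rule that[of f g])
    using A fg(1) by auto
qed

lemma c2_card: "card (orb ` flags F) = 2" using c2 unfolding class_2_01_def by blast

lemma R0: "(v, e, f) \<in> flags F \<Longrightarrow> (v', e, f) \<in> flags F \<Longrightarrow> v' \<noteq> v \<Longrightarrow> (v', e, f) \<in> orb (v, e, f)"
  using c2 unfolding class_2_01_def by blast
lemma R1: "(v, e, f) \<in> flags F \<Longrightarrow> (v, e', f) \<in> flags F \<Longrightarrow> e' \<noteq> e \<Longrightarrow> (v, e', f) \<in> orb (v, e, f)"
  using c2 unfolding class_2_01_def by blast
lemma R2: "(v, e, f) \<in> flags F \<Longrightarrow> (v, e, f') \<in> flags F \<Longrightarrow> f' \<noteq> f \<Longrightarrow> (v, e, f') \<notin> orb (v, e, f)"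
  using c2 unfolding class_2_01_def by blast

lemma flags_iff: "(v, e, f) \<in> flags F \<longleftrightarrow> f \<in> F \<and> e \<in> f \<and> v \<in> e"
  unfolding flags_def by simp

lemma G_bij: "G \<sigma> \<Longrightarrow> bij_betw \<sigma> V V" unfolding map_aut_def by blast
lemma G_adj: "G \<sigma> \<Longrightarrow> u \<in> V \<Longrightarrow> v \<in> V \<Longrightarrow> {u, v} \<in> E \<longleftrightarrow> {\<sigma> u, \<sigma> v} \<in> E"
  unfolding map_aut_def by blast
lemma G_F: "G \<sigma> \<Longrightarrow> fimg \<sigma> ` F = F" unfolding map_aut_def fimg_def by blast
lemma G_V: "G \<sigma> \<Longrightarrow> x \<in> V \<Longrightarrow> \<sigma> x \<in> V" using G_bij bij_betwE by blast
lemma G_inj: "G \<sigma> \<Longrightarrow> x \<in> V \<Longrightarrow> y \<in> V \<Longrightarrow> \<sigma> x = \<sigma> y \<Longrightarrow> x = y"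
  using G_bij bij_betw_imp_inj_on inj_onD by metis
lemma G_face: "G \<sigma> \<Longrightarrow> f \<in> F \<Longrightarrow> fimg \<sigma> f \<in> F" using G_F by blast

lemma G_id: "G id"
  unfolding map_aut_def by (simp add: image_id[abs_def])

lemma G_comp:
  assumes "G \<sigma>" "G \<tau>"
  shows "G (\<sigma> \<circ> \<tau>)"
proof -
  have "bij_betw (\<sigma> \<circ> \<tau>) V V" using G_bij assms bij_betw_trans by blast
  moreover have "\<forall>u\<in>V. \<forall>v\<in>V. {u, v} \<in> E \<longleftrightarrow> {(\<sigma> \<circ> \<tau>) u, (\<sigma> \<circ> \<tau>) v} \<in> E"
  proof (intro ballI)
    fix u v assume uv: "u \<in> V" "v \<in> V"
    have "{u, v} \<in> E \<longleftrightarrow> {\<tau> u, \<tau> v} \<in> E" using G_adj[OF assms(2) uv] .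
    also have "\<dots> \<longleftrightarrow> {\<sigma> (\<tau> u), \<sigma> (\<tau> v)} \<in> E" using G_adj[OF assms(1)] G_V[OF assms(2)] uv by blast
    finally show "{u, v} \<in> E \<longleftrightarrow> {(\<sigma> \<circ> \<tau>) u, (\<sigma> \<circ> \<tau>) v} \<in> E" by simp
  qed
  moreover have "fimg (\<sigma> \<circ> \<tau>) = fimg \<sigma> \<circ> fimg \<tau>"
    unfolding fimg_def by (auto simp: fun_eq_iff image_comp)
  then have "fimg (\<sigma> \<circ> \<tau>) ` F = fimg \<sigma> ` (fimg \<tau> ` F)" by (simp only: image_comp)
  then have "fimg (\<sigma> \<circ> \<tau>) ` F = F" using G_F[OF assms(1)] G_F[OF assms(2)] by simp
  ultimately show ?thesis unfolding map_aut_def fimg_def by blast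
qed

lemma F_V: "f \<in> F \<Longrightarrow> e \<in> f \<Longrightarrow> e \<subseteq> V" using F_E E_V by blast

lemma fimg_id_on: "(\<And>x. x \<in> V \<Longrightarrow> \<rho> x = x) \<Longrightarrow> f \<in> F \<Longrightarrow> fimg \<rho> f = f"
proof -
  assume r: "\<And>x. x \<in> V \<Longrightarrow> \<rho> x = x" and f: "f \<in> F"
  have "\<rho> ` e = e" if "e \<in> f" for e
  proof -
    have "e \<subseteq> V" using F_V f that by blast
    then show ?thesis using r by (auto simp: image_iff) (metis subsetD)
  qed
  then show ?thesis unfolding fimg_def by simp
qed

lemma G_inv:
  assumes "G \<sigma>"
  obtains \<sigma>' where "G \<sigma>'" "\<And>x. x \<in> V \<Longrightarrow> \<sigma>' (\<sigma> x) = x" "\<And>x. x \<in> V \<Longrightarrow> \<sigma> (\<sigma>' x) = x"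
proof -
  define \<sigma>' where "\<sigma>' = inv_into V \<sigma>"
  have b: "bij_betw \<sigma> V V" using G_bij assms by blast
  have b': "bij_betw \<sigma>' V V" unfolding \<sigma>'_def using b by (rule bij_betw_inv_into)
  have l: "\<sigma>' (\<sigma> x) = x" if "x \<in> V" for x
    unfolding \<sigma>'_def using b that bij_betw_inv_into_left by metis
  have r: "\<sigma> (\<sigma>' x) = x" if "x \<in> V" for x
    unfolding \<sigma>'_def using b that bij_betw_inv_into_right by metis
  have s'V: "x \<in> V \<Longrightarrow> \<sigma>' x \<in> V" for x using b' bij_betwE by blast
  have adj': "\<forall>u\<in>V. \<forall>v\<in>V. {u, v} \<in> E \<longleftrightarrow> {\<sigma>' u, \<sigma>' v} \<in> E"
  proof (intro ballI)
    fix u v assume "u \<in> V" "v \<in> V"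
    then show "{u, v} \<in> E \<longleftrightarrow> {\<sigma>' u, \<sigma>' v} \<in> E"
      using G_adj[OF assms, of "\<sigma>' u" "\<sigma>' v"] s'V r by simp
  qed
  have comp: "fimg \<sigma>' (fimg \<sigma> f) = f" if "f \<in> F" for f
  proof -
    have "fimg \<sigma>' (fimg \<sigma> f) = fimg (\<sigma>' \<circ> \<sigma>) f" unfolding fimg_def by (simp add: image_comp)
    also have "\<dots> = f" using fimg_id_on[of "\<sigma>' \<circ> \<sigma>"] l that by simp
    finally show ?thesis .
  qed
  have "fimg \<sigma>' ` F = F"
  proof -
    have "fimg \<sigma>' ` F = fimg \<sigma>' ` (fimg \<sigma> ` F)" using G_F[OF assms] by simp
    also have "\<dots> = (\<lambda>f. fimg \<sigma>' (fimg \<sigma> f)) ` F" by (simp only: image_image)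
    also have "\<dots> = F" using comp by simp
    finally show ?thesis .
  qed
  then have "G \<sigma>'" using b' adj' unfolding map_aut_def fimg_def by blast
  then show ?thesis using that l r by blast
qed

lemma flag_act_simp: "flag_act \<sigma> (v, e, f) = (\<sigma> v, \<sigma> ` e, fimg \<sigma> f)"
  unfolding flag_act_def fimg_def by simp

lemma flags_act: "G \<sigma> \<Longrightarrow> \<Phi> \<in> flags F \<Longrightarrow> flag_act \<sigma> \<Phi> \<in> flags F"
  unfolding flags_def flag_act_def using G_face unfolding fimg_def by fastforce

lemma flag_act_comp: "flag_act (\<sigma> \<circ> \<tau>) \<Phi> = flag_act \<sigma> (flag_act \<tau> \<Phi>)"
  unfolding flag_act_def by (cases \<Phi>) (auto simp: image_comp)

lemma flag_act_id_on: "(\<And>x. x \<in> V \<Longrightarrow> \<rho> x = x) \<Longrightarrow> \<Phi> \<in> flags F \<Longrightarrow> flag_act \<rho> \<Phi> = \<Phi>"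
proof -
  assume r: "\<And>x. x \<in> V \<Longrightarrow> \<rho> x = x" and p: "\<Phi> \<in> flags F"
  obtain v e f where P: "\<Phi> = (v, e, f)" by (cases \<Phi>)
  have fl: "f \<in> F" "e \<in> f" "v \<in> e" using p P flags_iff by auto
  have eV: "e \<subseteq> V" using F_V fl by blast
  have "\<rho> v = v" using r eV fl by blast
  moreover have "\<rho> ` e = e" using r eV by (auto simp: image_iff) (metis subsetD)
  moreover have "fimg \<rho> f = f" using fimg_id_on r fl by blast
  ultimately show ?thesis using P flag_act_simp by simp
qed

lemma orb_mem: "\<Psi> \<in> orb \<Phi> \<longleftrightarrow> (\<exists>\<sigma>. G \<sigma> \<and> \<Psi> = flag_act \<sigma> \<Phi>)"
  unfolding flag_orbit_def by blast

lemma orb_self: "\<Phi> \<in> orb \<Phi>"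
proof -
  have "flag_act id \<Phi> = \<Phi>" unfolding flag_act_def by (cases \<Phi>) auto
  then show ?thesis using G_id orb_mem by metis
qed

lemma orb_trans: "\<Psi> \<in> orb \<Phi> \<Longrightarrow> X \<in> orb \<Psi> \<Longrightarrow> X \<in> orb \<Phi>"
  unfolding orb_mem using G_comp flag_act_comp by metis

lemma orb_sym:
  assumes "\<Phi> \<in> flags F" "\<Psi> \<in> orb \<Phi>"
  shows "\<Phi> \<in> orb \<Psi>"
proof -
  obtain \<sigma> where s: "G \<sigma>" "\<Psi> = flag_act \<sigma> \<Phi>" using assms(2) orb_mem by blast
  obtain \<sigma>' where s': "G \<sigma>'" "\<And>x. x \<in> V \<Longrightarrow> \<sigma>' (\<sigma> x) = x" using G_inv[OF s(1)] by metis
  have "flag_act \<sigma>' \<Psi> = flag_act (\<sigma>' \<circ> \<sigma>) \<Phi>" by (simp only: flag_act_comp s(2))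
  also have "\<dots> = \<Phi>" using flag_act_id_on[OF _ assms(1)] s' by simp
  finally show ?thesis using s' orb_mem by metis
qed

lemma orb_eq: "\<Phi> \<in> flags F \<Longrightarrow> \<Psi> \<in> orb \<Phi> \<Longrightarrow> orb \<Psi> = orb \<Phi>"
  using orb_trans orb_sym by blast

end

lemma cyc_ne: "is_cycle_edges f \<Longrightarrow> \<exists>e\<in>f. \<exists>x. x \<in> e"
proof -
  assume "is_cycle_edges f"
  then obtain vs where d: "distinct vs" "length vs \<ge> 3"
    and f: "f = {{vs ! i, vs ! ((i + 1) mod length vs)} | i. i < length vs}"
    by (rule cyc_obtain)
  have "{vs ! 0, vs ! ((0 + 1) mod length vs)} \<in> f" using f d by auto
  then show ?thesis by blast
qed

context RW
begin

lemma face_flags_orb: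
  assumes f: "f \<in> F" and p: "(v, e, f) \<in> flags F" and q: "(v', e', f) \<in> flags F"
  shows "orb (v', e', f) = orb (v, e, f)"
proof -
  define S where "S = {x. \<forall>d\<in>f. x \<in> d \<longrightarrow> orb (x, d, f) = orb (v, e, f)}"
  have cyc: "is_cycle_edges f" using F_cyc f by blast
  have ve: "e \<in> f" "v \<in> e" using p flags_iff by auto
  have vS: "v \<in> S"
  proof -
    have "orb (v, d, f) = orb (v, e, f)" if "d \<in> f" "v \<in> d" for d
    proof (cases "d = e")
      case True then show ?thesis by simp
    next
      case False
      have "(v, d, f) \<in> orb (v, e, f)" using R1[OF p] that f False flags_iff by auto
      then show ?thesis using orb_eq p by blast
    qed
    then show ?thesis unfolding S_def by blast
  qed
  have cl: "d \<subseteq> S" if d: "d \<in> f" "x \<in> d" "x \<in> S" for d x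
  proof
    fix y assume y: "y \<in> d"
    show "y \<in> S"
    proof (cases "y = x")
      case True then show ?thesis using d by simp
    next
      case False
      have fx: "(x, d, f) \<in> flags F" using d f flags_iff by auto
      have fy: "(y, d, f) \<in> flags F" using y d f flags_iff by auto
      have yo: "(y, d, f) \<in> orb (x, d, f)" using R0[OF fx fy False] .
      have ox: "orb (x, d, f) = orb (v, e, f)" using d unfolding S_def by blast
      have oy: "orb (y, d, f) = orb (v, e, f)" using orb_eq[OF fx yo] ox by simp
      have "orb (y, d', f) = orb (v, e, f)" if "d' \<in> f" "y \<in> d'" for d'
      proof (cases "d' = d")
        case True then show ?thesis using oy by simp
      next
        case False
        have "(y, d', f) \<in> orb (y, d, f)" using R1[OF fy] that f False flags_iff by auto
        then show ?thesis using orb_eq[OF fy] oy by simp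
      qed
      then show ?thesis unfolding S_def by blast
    qed
  qed
  have vU: "v \<in> \<Union> f" using ve by blast
  have "\<Union> f \<subseteq> S" by (rule cyc_closed[OF cyc vS vU cl])
  moreover have "v' \<in> \<Union> f" using q flags_iff by auto
  ultimately show ?thesis using q flags_iff S_def by auto
qed

lemma face_flag: "f \<in> F \<Longrightarrow> \<exists>v e. (v, e, f) \<in> flags F"
  using cyc_ne F_cyc flags_iff by blast

definition forb :: "(bool \<times> nat) set set \<Rightarrow> _" where
  "forb f = orb (SOME \<Phi>. \<Phi> \<in> flags F \<and> snd (snd \<Phi>) = f)"

lemma forb_flag: "(v, e, f) \<in> flags F \<Longrightarrow> forb f = orb (v, e, f)"
proof -
  assume p: "(v, e, f) \<in> flags F"
  define P where "P = (\<lambda>\<Phi>::(bool \<times> nat) \<times> (bool \<times> nat) set \<times> (bool \<times> nat) set set. \<Phi> \<in> flags F \<and> snd (snd \<Phi>) = f)"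
  define \<Phi>0 where "\<Phi>0 = (SOME \<Phi>. P \<Phi>)"
  have "P (v, e, f)" using p unfolding P_def by simp
  then have s: "P \<Phi>0" unfolding \<Phi>0_def by (rule someI)
  obtain a b c where abc: "\<Phi>0 = (a, b, c)" by (rule prod_cases3)
  have c: "c = f" and q: "(a, b, f) \<in> flags F" using s abc unfolding P_def by auto
  have fF: "f \<in> F" using p unfolding flags_iff by blast
  have "forb f = orb \<Phi>0" unfolding forb_def \<Phi>0_def P_def by simp
  also have "\<dots> = orb (a, b, f)" using abc c by simp
  also have "\<dots> = orb (v, e, f)" by (rule face_flags_orb[OF fF p q])
  finally show ?thesis .
qed

lemma forb_in: "f \<in> F \<Longrightarrow> forb f \<in> orb ` flags F"
  using face_flag forb_flag by blast

lemma forb_adj: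
  assumes "f \<in> F" "g \<in> F" "f \<noteq> g" "e \<in> f" "e \<in> g" "v \<in> e"
  shows "forb f \<noteq> forb g"
proof
  assume h: "forb f = forb g"
  have pf: "(v, e, f) \<in> flags F" and pg: "(v, e, g) \<in> flags F" using assms flags_iff by auto
  have "(v, e, g) \<in> orb (v, e, f)" using h forb_flag[OF pf] forb_flag[OF pg] orb_self by metis
  then show False using R2[OF pf pg] assms(3) by auto
qed

lemma edge0: "{(True, 0), upT (True, 0)} \<in> E"
  using edge_upT n3 by (simp add: inV)

lemma F_ne: "\<exists>f. f \<in> F"
  using two_faces[OF edge0] by metis

definition O1 where "O1 = forb (SOME f. f \<in> F)"

lemma OS2: "\<exists>O2. O2 \<noteq> O1 \<and> orb ` flags F = {O1, O2}"
proof -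
  have "O1 \<in> orb ` flags F" unfolding O1_def using forb_in F_ne someI_ex by metis
  moreover obtain A B where AB: "A \<noteq> B" "orb ` flags F = {A, B}" using c2_card by (auto simp: card_2_iff)
  ultimately have "O1 = A \<or> O1 = B" by simp
  then show ?thesis
  proof
    assume "O1 = A" then show ?thesis using AB by (intro exI[of _ B]) simp
  next
    assume "O1 = B" then show ?thesis using AB by (intro exI[of _ A]) auto
  qed
qed

definition O2 where "O2 = (SOME O2. O2 \<noteq> O1 \<and> orb ` flags F = {O1, O2})"

lemma O12: "O2 \<noteq> O1" "orb ` flags F = {O1, O2}"
  using someI_ex[OF OS2] unfolding O2_def by auto

definition col :: "(bool \<times> nat) set set \<Rightarrow> bool" where
  "col f \<longleftrightarrow> forb f = O1"

lemma forb_cases: "f \<in> F \<Longrightarrow> forb f = (if col f then O1 else O2)"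
  using forb_in O12 col_def by auto

lemma col_adj:
  assumes "f \<in> F" "g \<in> F" "f \<noteq> g" "e \<in> f" "e \<in> g"
  shows "col f \<noteq> col g"
proof -
  obtain v where "v \<in> e" using assms(4) F_E assms(1) E_sub by blast
  then have "forb f \<noteq> forb g" using forb_adj assms by blast
  then show ?thesis using forb_cases assms by (auto split: if_splits)
qed

lemma col_G:
  assumes "G \<sigma>" "f \<in> F"
  shows "col (fimg \<sigma> f) = col f"
proof -
  obtain v e where p: "(v, e, f) \<in> flags F" using face_flag assms(2) by blast
  have q: "flag_act \<sigma> (v, e, f) \<in> flags F" using flags_act assms p by blast
  have o: "flag_act \<sigma> (v, e, f) \<in> orb (v, e, f)" using assms(1) orb_mem by blast
  have "forb (fimg \<sigma> f) = orb (flag_act \<sigma> (v, e, f))" using forb_flag q flag_act_simp by simp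
  also have "\<dots> = orb (v, e, f)" using orb_eq[OF p o] .
  also have "\<dots> = forb f" using forb_flag p by simp
  finally show ?thesis unfolding col_def by simp
qed

lemma col_trans:
  assumes "col f = col g" "(v, e, f) \<in> flags F" "(v', e', g) \<in> flags F"
  obtains \<sigma> where "G \<sigma>" "\<sigma> v = v'" "\<sigma> ` e = e'" "fimg \<sigma> f = g"
proof -
  have fF: "f \<in> F" using assms(2) unfolding flags_iff by blast
  have gF: "g \<in> F" using assms(3) unfolding flags_iff by blast
  have "forb f = forb g" using forb_cases[OF fF] forb_cases[OF gF] assms(1) by simp
  have o: "orb (v', e', g) = orb (v, e, f)"
  proof -
    have "orb (v', e', g) = forb g" using forb_flag[OF assms(3)] by simp
    also have "\<dots> = forb f" using \<open>forb f = forb g\<close> by simp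
    also have "\<dots> = orb (v, e, f)" using forb_flag[OF assms(2)] by simp
    finally show ?thesis .
  qed
  have "(v', e', g) \<in> orb (v', e', g)" by (rule orb_self)
  then have "(v', e', g) \<in> orb (v, e, f)" using o by simp
  then obtain \<sigma> where s: "G \<sigma>" "(v', e', g) = flag_act \<sigma> (v, e, f)" unfolding orb_mem by blast
  then have "(v', e', g) = (\<sigma> v, \<sigma> ` e, fimg \<sigma> f)" by (simp only: flag_act_simp)
  then have "\<sigma> v = v'" "\<sigma> ` e = e'" "fimg \<sigma> f = g" by auto
  then show ?thesis using s(1) that by blast
qed

lemma card_G:
  assumes "G \<sigma>" "f \<in> F"
  shows "card (fimg \<sigma> f) = card f"
proof -
  have inj: "inj_on \<sigma> V" using bij_betw_imp_inj_on[OF G_bij[OF assms(1)]] .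
  have "inj_on (\<lambda>e. \<sigma> ` e) f"
  proof
    fix a b assume ab: "a \<in> f" "b \<in> f" "\<sigma> ` a = \<sigma> ` b"
    have "a \<subseteq> V" "b \<subseteq> V" using F_V assms(2) ab by auto
    then show "a = b" using inj_on_image_eq_iff[OF inj] ab(3) by metis
  qed
  then show ?thesis unfolding fimg_def by (simp add: card_image)
qed

lemma col_card:
  assumes "f \<in> F" "g \<in> F" "col f = col g"
  shows "card f = card g"
proof -
  obtain v e where p: "(v, e, f) \<in> flags F" using face_flag assms(1) by blast
  obtain v' e' where q: "(v', e', g) \<in> flags F" using face_flag assms(2) by blast
  obtain \<sigma> where "G \<sigma>" "fimg \<sigma> f = g" using col_trans[OF assms(3) p q] by metis
  then show ?thesis using card_G assms by metis
qed

lemma face_col: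
  assumes "e \<in> E"
  shows "\<exists>!f. f \<in> F \<and> e \<in> f \<and> col f = c"
proof -
  obtain f g where fg: "f \<in> F" "g \<in> F" "f \<noteq> g" "e \<in> f" "e \<in> g"
    and oth: "\<And>h. h \<in> F \<Longrightarrow> e \<in> h \<Longrightarrow> h = f \<or> h = g" using two_faces[OF assms] by blast
  have d: "col f \<noteq> col g" by (rule col_adj[OF fg(1-5)])
  show ?thesis
  proof (cases "col f = c")
    case True
    show ?thesis
    proof (rule ex1I[of _ f])
      show "f \<in> F \<and> e \<in> f \<and> col f = c" using fg True by simp
    next
      fix h assume h: "h \<in> F \<and> e \<in> h \<and> col h = c"
      then have "h = f \<or> h = g" using oth by blast
      then show "h = f" using h d True by metis
    qed
  next
    case False
    then have gc: "col g = c" using d by blast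
    show ?thesis
    proof (rule ex1I[of _ g])
      show "g \<in> F \<and> e \<in> g \<and> col g = c" using fg gc by simp
    next
      fix h assume h: "h \<in> F \<and> e \<in> h \<and> col h = c"
      then have "h = f \<or> h = g" using oth by blast
      then show "h = g" using h False by metis
    qed
  qed
qed

definition fc :: "bool \<Rightarrow> (bool \<times> nat) set \<Rightarrow> (bool \<times> nat) set set" where
  "fc c e = (THE f. f \<in> F \<and> e \<in> f \<and> col f = c)"

lemma fc: "e \<in> E \<Longrightarrow> fc c e \<in> F \<and> e \<in> fc c e \<and> col (fc c e) = c"
  unfolding fc_def using theI'[OF face_col] by blast

lemma fc_uniq: "f \<in> F \<Longrightarrow> e \<in> f \<Longrightarrow> fc (col f) e = f"
proof -
  assume f: "f \<in> F" "e \<in> f"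
  have eE: "e \<in> E" using F_E f by blast
  show ?thesis unfolding fc_def
    by (rule the1_equality[OF face_col[OF eE]]) (simp add: f)
qed

end

context RW
begin

definition dn :: "bool \<times> nat \<Rightarrow> bool \<times> nat" where
  "dn w = (if fst w then (False, snd w) else (False, (snd w + n - 1) mod n))"

lemma dn_V: "w \<in> V \<Longrightarrow> dn w \<in> V"
  unfolding dn_def inV using npos by auto

lemma up_dn: "w \<in> V \<Longrightarrow> up (dn w) w"
proof -
  assume wV: "w \<in> V"
  obtain b i where w: "w = (b, i)" by (cases w)
  have i: "i < n" using wV w by (simp add: inV)
  show ?thesis
  proof (cases b)
    case True
    have "upT (dn w) = w" using w True by (simp add: dn_def upT_def)
    then show ?thesis using up_upT[OF dn_V[OF wV]] by simp
  next
    case False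
    have "((i + n - 1) mod n + 1) mod n = i"
    proof -
      have "((i + n - 1) mod n + 1) mod n = (i + n - 1 + 1) mod n" by (simp add: mod_Suc_eq)
      also have "i + n - 1 + 1 = i + n" using n3 by simp
      finally show ?thesis using i by simp
    qed
    then have "upF (dn w) = w" using w False by (simp add: dn_def upF_def)
    then show ?thesis using up_upF[OF dn_V[OF wV]] by simp
  qed
qed

lemma edge_eq_other: "{w, a} = {w, b} \<Longrightarrow> a = b"
  by (metis doubleton_eq_iff)

lemma four_edges:
  assumes "w \<in> V"
  shows "\<exists>e3\<in>E. w \<in> e3 \<and> e3 \<noteq> e1 \<and> e3 \<noteq> e2"
proof -
  define a1 where "a1 = upF w"
  define a2 where "a2 = upT w"
  define a3 where "a3 = dn w"
  define a4 where "a4 = tw (dn w)"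
  have V: "a1 \<in> V" "a2 \<in> V" "a3 \<in> V" "a4 \<in> V"
    using assms upF_V upT_V dn_V tw_V unfolding a1_def a2_def a3_def a4_def by auto
  have u: "up w a1" "up w a2" "up a3 w" "up a4 w"
    using assms up_upF up_upT up_dn up_twin dn_V unfolding a1_def a2_def a3_def a4_def by auto
  have E: "{w, a1} \<in> E" "{w, a2} \<in> E" "{w, a3} \<in> E" "{w, a4} \<in> E"
    using edge_iff assms V u adj_def by auto
  have d12: "a1 \<noteq> a2" unfolding a1_def a2_def using fst_upF fst_upT by metis
  have d34: "a3 \<noteq> a4" unfolding a3_def a4_def using tw_ne by metis
  have d13: "a1 \<noteq> a3" "a1 \<noteq> a4" "a2 \<noteq> a3" "a2 \<noteq> a4"
    using u up_up_not assms V by metis+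
  have ne: "{w, a1} \<noteq> {w, a2}" "{w, a1} \<noteq> {w, a3}" "{w, a1} \<noteq> {w, a4}"
     "{w, a2} \<noteq> {w, a3}" "{w, a2} \<noteq> {w, a4}" "{w, a3} \<noteq> {w, a4}"
    using d12 d34 d13 edge_eq_other by metis+
  show ?thesis
  proof (rule ccontr)
    assume "\<not> ?thesis"
    then have h: "\<And>x. x \<in> E \<Longrightarrow> w \<in> x \<Longrightarrow> x = e1 \<or> x = e2" by blast
    have "{w, a1} = e1 \<or> {w, a1} = e2" using h E by simp
    moreover have "{w, a2} = e1 \<or> {w, a2} = e2" using h E by simp
    moreover have "{w, a3} = e1 \<or> {w, a3} = e2" using h E by simp
    ultimately show False using ne by metis
  qed
qed

lemma faces_at_edge:
  assumes "d \<in> E" "f \<in> F" "g \<in> F" "f \<noteq> g" "d \<in> f" "d \<in> g" "h \<in> F" "d \<in> h"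
  shows "h = f \<or> h = g"
proof -
  obtain f' g' where fg: "f' \<in> F" "g' \<in> F" "f' \<noteq> g'" "d \<in> f'" "d \<in> g'"
    and oth: "\<And>h. h \<in> F \<Longrightarrow> d \<in> h \<Longrightarrow> h = f' \<or> h = g'" using two_faces[OF assms(1)] by blast
  have "h = f' \<or> h = g'" "f = f' \<or> f = g'" "g = f' \<or> g = g'" using oth assms by auto
  then show ?thesis using assms(4) by metis
qed

lemma no_shared_angle:
  assumes "f \<in> F" "g \<in> F" "f \<noteq> g" "e1 \<noteq> e2" "e1 \<in> f" "e2 \<in> f" "e1 \<in> g" "e2 \<in> g"
    "w \<in> e1" "w \<in> e2"
  shows False
proof -
  have e1E: "e1 \<in> E" and e2E: "e2 \<in> E" using assms F_E by auto
  have wV: "w \<in> V" using E_V e1E assms(9) by blast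
  obtain e3 where e3: "e3 \<in> E" "w \<in> e3" "e3 \<noteq> e1" "e3 \<noteq> e2" using four_edges[OF wV] by blast
  define R where "R = {(d, d'). w \<in> d \<and> w \<in> d' \<and> (\<exists>f\<in>F. d \<in> f \<and> d' \<in> f)}"
  have "(e1, e3) \<in> R\<^sup>*" using pm_link[OF wV e1E e3(1) assms(9) e3(2)] unfolding R_def .
  moreover have "d \<in> {e1, e2}" if "(e1, d) \<in> R\<^sup>*" for d
    using that
  proof (induction rule: rtrancl_induct)
    case base then show ?case by simp
  next
    case (step d d')
    obtain h where h: "h \<in> F" "d \<in> h" "d' \<in> h" "w \<in> d" "w \<in> d'" using step(2) unfolding R_def by blast
    have dE: "d \<in> E" using step(3) e1E e2E by blast
    have "d \<in> f" "d \<in> g" using step(3) assms by auto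
    then have hfg: "h = f \<or> h = g" using faces_at_edge[OF dE assms(1,2,3)] h by blast
    have "e1 \<in> h" "e2 \<in> h" using hfg assms by auto
    then have "e1 = e2 \<or> e1 = d' \<or> e2 = d'" using cyc_three[OF F_cyc[OF h(1)]] h assms(9,10) by blast
    then show ?case using assms(4) by blast
  qed
  ultimately show False using e3 by blast
qed

lemma G_adj': "G \<sigma> \<Longrightarrow> a \<in> V \<Longrightarrow> b \<in> V \<Longrightarrow> adj (\<sigma> a) (\<sigma> b) \<longleftrightarrow> adj a b"
  using G_adj edge_iff G_V by metis

lemma G_surj: "G \<sigma> \<Longrightarrow> y \<in> V \<Longrightarrow> \<exists>x\<in>V. \<sigma> x = y"
  using G_bij bij_betw_iff_bijections by metis

lemma nbhd_same_block:
  assumes "a \<in> V" "b \<in> V" "\<And>y. y \<in> V \<Longrightarrow> adj a y \<longleftrightarrow> adj b y"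
  shows "bl a = bl b"
proof (rule ccontr)
  assume ne: "bl a \<noteq> bl b"
  have y1: "upT a \<in> V" "up a (upT a)" using upT_V up_upT assms by auto
  have y2: "dn a \<in> V" "up (dn a) a" using dn_V up_dn assms by auto
  have "adj b (upT a)" using assms(3)[OF y1(1)] y1 adj_def by blast
  then have c1: "up b (upT a) \<or> up (upT a) b" unfolding adj_def .
  have "adj b (dn a)" using assms(3)[OF y2(1)] y2 adj_def by blast
  then have c2: "up b (dn a) \<or> up (dn a) b" unfolding adj_def .
  have nd: "\<not> int n dvd (bl b - bl a)" using same_dvd assms ne by metis
  have A: "int n dvd (bl (upT a) - bl a - 1)" using up_dvd y1 assms by blast
  have B: "int n dvd (bl a - bl (dn a) - 1)" using up_dvd y2 assms by blast
  have c1': "int n dvd (bl b - bl a - 2)"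
  proof -
    have "up (upT a) b" using c1
    proof
      assume "up b (upT a)"
      then have "int n dvd (bl (upT a) - bl b - 1)" using up_dvd y1 assms by blast
      then have "int n dvd ((bl (upT a) - bl a - 1) - (bl (upT a) - bl b - 1))" using A dvd_diff by blast
      then have "int n dvd (bl b - bl a)" by (simp add: algebra_simps)
      then show ?thesis using nd by blast
    qed
    then have "int n dvd (bl b - bl (upT a) - 1)" using up_dvd y1 assms by blast
    then have "int n dvd ((bl b - bl (upT a) - 1) + (bl (upT a) - bl a - 1))" using A dvd_add by blast
    then show ?thesis by (simp add: algebra_simps)
  qed
  have c2': "int n dvd (bl a - bl b - 2)"
  proof -
    have "up b (dn a)" using c2
    proof (rule disjE)
      assume "up (dn a) b"
      then have "int n dvd (bl b - bl (dn a) - 1)" using up_dvd y2 assms by blast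
      then have "int n dvd ((bl a - bl (dn a) - 1) - (bl b - bl (dn a) - 1))" using B dvd_diff by blast
      then have "int n dvd (bl a - bl b)" by (simp add: algebra_simps)
      then have "int n dvd (bl b - bl a)" using dvd_diff_commute by blast
      then show ?thesis using nd by blast
    qed
    then have "int n dvd (bl (dn a) - bl b - 1)" using up_dvd y2 assms by blast
    then have "int n dvd ((bl (dn a) - bl b - 1) + (bl a - bl (dn a) - 1))" using B dvd_add by blast
    then show ?thesis by (simp add: algebra_simps)
  qed
  have "int n dvd ((bl b - bl a - 2) + (bl a - bl b - 2))" using c1' c2' dvd_add by blast
  then have "int n dvd -4" by simp
  then show False using ndvd_small by blast
qed

lemma G_tw:
  assumes "G \<sigma>" "x \<in> V"
  shows "\<sigma> (tw x) = tw (\<sigma> x)"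
proof -
  have txV: "tw x \<in> V" using tw_V assms by blast
  have sx: "\<sigma> x \<in> V" and stx: "\<sigma> (tw x) \<in> V" using G_V assms txV by auto
  have nb: "adj (\<sigma> (tw x)) y \<longleftrightarrow> adj (\<sigma> x) y" if yV: "y \<in> V" for y
  proof -
    obtain z where z: "z \<in> V" "\<sigma> z = y" using G_surj assms(1) yV by blast
    have "adj (\<sigma> (tw x)) y \<longleftrightarrow> adj (tw x) z" using G_adj'[OF assms(1) txV z(1)] z by simp
    also have "\<dots> \<longleftrightarrow> adj x z" using adj_twin tw_tw assms(2) txV z(1) by metis
    also have "\<dots> \<longleftrightarrow> adj (\<sigma> x) y" using G_adj'[OF assms(1) assms(2) z(1)] z by simp
    finally show ?thesis .
  qed
  have "bl (\<sigma> x) = bl (\<sigma> (tw x))" using nbhd_same_block[OF sx stx] nb by metis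
  then have "\<sigma> (tw x) = \<sigma> x \<or> \<sigma> (tw x) = tw (\<sigma> x)" using bl_eq sx stx by blast
  moreover have "\<sigma> (tw x) \<noteq> \<sigma> x" using G_inj[OF assms(1) txV assms(2)] tw_ne by metis
  ultimately show ?thesis by blast
qed

end

context RW
begin

lemma face_edge: "f \<in> F \<Longrightarrow> {x, y} \<in> f \<Longrightarrow> x \<in> V \<and> y \<in> V \<and> adj x y"
proof -
  assume "f \<in> F" "{x, y} \<in> f"
  then have e: "{x, y} \<in> E" using F_E by blast
  then have "x \<in> V" "y \<in> V" using E_V by auto
  then show ?thesis using edge_iff e by blast
qed

lemma edge_other:
  assumes "d \<in> E" "v \<in> d"
  obtains b where "d = {v, b}" "b \<in> V" "adj v b"
proof -
  obtain x y where xy: "x \<in> V" "y \<in> V" "adj x y" "d = {x, y}" using E_sub assms(1) by blast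
  show ?thesis
  proof (cases "v = x")
    case True then show ?thesis using that xy by blast
  next
    case False
    then have "v = y" using xy assms(2) by blast
    then show ?thesis using that[of x] xy adj_def by (auto simp: insert_commute)
  qed
qed

lemma fimg_mem: "d \<in> f \<Longrightarrow> \<sigma> ` d \<in> fimg \<sigma> f" unfolding fimg_def by blast

lemma refl_edge:
  assumes "f \<in> F" "{v, a} \<in> f"
  obtains \<sigma> where "G \<sigma>" "\<sigma> v = a" "\<sigma> a = v" "fimg \<sigma> f = f"
proof -
  have va: "v \<noteq> a" using face_edge[OF assms] adj_ne by blast
  have p: "(v, {v, a}, f) \<in> flags F" and q: "(a, {v, a}, f) \<in> flags F" using assms flags_iff by auto
  have "(a, {v, a}, f) \<in> orb (v, {v, a}, f)" using R0[OF p q] va by blast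
  then obtain \<sigma> where s: "G \<sigma>" "(a, {v, a}, f) = flag_act \<sigma> (v, {v, a}, f)" unfolding orb_mem by blast
  from s(2) have eq: "(a, {v, a}, f) = (\<sigma> v, {\<sigma> v, \<sigma> a}, fimg \<sigma> f)"
    by (simp only: flag_act_simp image_insert image_empty)
  have sv: "\<sigma> v = a" using arg_cong[OF eq, of fst] by simp
  have e2: "{v, a} = {\<sigma> v, \<sigma> a}" using arg_cong[OF eq, of "\<lambda>x. fst (snd x)"] by simp
  have ff: "fimg \<sigma> f = f" using arg_cong[OF eq, of "\<lambda>x. snd (snd x)"] by simp
  have ee: "{v, a} = {a, \<sigma> a}" using e2 sv by simp
  from ee have "\<sigma> a = v" using va unfolding doubleton_eq_iff by auto
  then show ?thesis using that s(1) sv ff by blast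
qed

lemma two_edges_at:
  assumes "f \<in> F" "e1 \<in> f" "e2 \<in> f" "e1 \<noteq> e2" "w \<in> e1" "w \<in> e2" "e \<in> f" "w \<in> e"
  shows "e = e1 \<or> e = e2"
  using cyc_three[OF F_cyc[OF assms(1)] assms(2,3,7,5,6,8)] assms(4) by blast

lemma ups3_not_adj:
  assumes "x0 \<in> V" "x1 \<in> V" "x2 \<in> V" "x3 \<in> V" "up x0 x1" "up x1 x2" "up x2 x3"
  shows "\<not> adj x0 x3"
proof
  assume a: "adj x0 x3"
  have d: "int n dvd (bl x1 - bl x0 - 1)" "int n dvd (bl x2 - bl x1 - 1)" "int n dvd (bl x3 - bl x2 - 1)"
    using up_dvd assms by auto
  then have "int n dvd ((bl x1 - bl x0 - 1) + (bl x2 - bl x1 - 1) + (bl x3 - bl x2 - 1))"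
    by (intro dvd_add) auto
  then have d3: "int n dvd (bl x3 - bl x0 - 3)" by (simp add: algebra_simps)
  from a show False unfolding adj_def
  proof
    assume "up x0 x3"
    then have "int n dvd (bl x3 - bl x0 - 1)" using up_dvd assms by auto
    then have "int n dvd ((bl x3 - bl x0 - 1) - (bl x3 - bl x0 - 3))" using d3 dvd_diff by blast
    then show False using ndvd_small by simp
  next
    assume "up x3 x0"
    then have "int n dvd (bl x0 - bl x3 - 1)" using up_dvd assms by auto
    then have "int n dvd ((bl x0 - bl x3 - 1) + (bl x3 - bl x0 - 3))" using d3 dvd_add by blast
    then show False using ndvd_small by simp
  qed
qed

lemma caseII:
  assumes fF: "f \<in> F" and e1: "{v, a} \<in> f" and e2: "{v, tw a} \<in> f"
  shows "\<exists>g\<in>F. card g \<noteq> card f"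
proof -
  have vV: "v \<in> V" and aV: "a \<in> V" and va: "adj v a" using face_edge[OF fF e1] by auto
  define a' where "a' = tw a"
  define v' where "v' = tw v"
  have a'V: "a' \<in> V" and v'V: "v' \<in> V" using tw_V aV vV a'_def v'_def by auto
  have e2': "{v, a'} \<in> f" using e2 a'_def by simp
  obtain \<sigma> where s: "G \<sigma>" "\<sigma> v = a" "\<sigma> a = v" "fimg \<sigma> f = f" using refl_edge[OF fF e1] by blast
  obtain \<tau> where t: "G \<tau>" "\<tau> v = a'" "\<tau> a' = v" "fimg \<tau> f = f" using refl_edge[OF fF e2'] by blast
  have e3: "{a, v'} \<in> f"
  proof -
    have "\<sigma> ` {v, a'} \<in> f" using fimg_mem[OF e2', of \<sigma>] s(4) by simp
    moreover have "\<sigma> a' = v'" unfolding a'_def v'_def using G_tw[OF s(1) aV] s(3) by simp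
    ultimately show ?thesis using s(2) by simp
  qed
  have e4: "{a', v'} \<in> f"
  proof -
    have "\<tau> ` {v, a} \<in> f" using fimg_mem[OF e1, of \<tau>] t(4) by simp
    moreover have "\<tau> a = v'"
    proof -
      have "\<tau> a = \<tau> (tw a')" using tw_tw aV a'_def by simp
      also have "\<dots> = tw (\<tau> a')" using G_tw[OF t(1) a'V] .
      finally show ?thesis using t(3) v'_def by simp
    qed
    ultimately show ?thesis using t(2) by simp
  qed
  have aa': "a \<noteq> a'" and vv': "v \<noteq> v'" using tw_ne a'_def v'_def by metis+
  have "v \<noteq> a" using adj_ne va vV by blast
  have "v \<noteq> a'" using face_edge[OF fF e2'] adj_ne by blast
  have "a \<noteq> v'" using face_edge[OF fF e3] adj_ne by blast
  have "a' \<noteq> v'" using face_edge[OF fF e4] adj_ne by blast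
  have n12: "{v, a} \<noteq> {v, a'}" using aa' edge_eq_other by metis
  have n13: "{v, a} \<noteq> {a, v'}" using vv' \<open>v \<noteq> a\<close> \<open>a \<noteq> v'\<close> by (auto simp: doubleton_eq_iff)
  have n24: "{v, a'} \<noteq> {a', v'}" using vv' \<open>v \<noteq> a'\<close> \<open>a' \<noteq> v'\<close> by (auto simp: doubleton_eq_iff)
  have n34: "{a, v'} \<noteq> {a', v'}" using aa' \<open>a \<noteq> v'\<close> \<open>a' \<noteq> v'\<close> by (auto simp: doubleton_eq_iff)
  define S where "S = {v, a, a', v'}"
  have cl: "d \<subseteq> S" if d: "d \<in> f" "x \<in> d" "x \<in> S" for d x
  proof -
    have "x = v \<or> x = a \<or> x = a' \<or> x = v'" using d(3) S_def by blast
    then show ?thesis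
    proof (elim disjE)
      assume xx: "x = v" then have "v \<in> d" using d(2) by simp
      then have "d = {v, a} \<or> d = {v, a'}" using two_edges_at[OF fF e1 e2' n12, where w=v and e=d] d(1) by simp
      then show ?thesis using S_def by auto
    next
      assume xx: "x = a" then have "a \<in> d" using d(2) by simp
      then have "d = {v, a} \<or> d = {a, v'}" using two_edges_at[OF fF e1 e3 n13, where w=a and e=d] d(1) by simp
      then show ?thesis using S_def by auto
    next
      assume xx: "x = a'" then have "a' \<in> d" using d(2) by simp
      then have "d = {v, a'} \<or> d = {a', v'}" using two_edges_at[OF fF e2' e4 n24, where w=a' and e=d] d(1) by simp
      then show ?thesis using S_def by auto
    next
      assume xx: "x = v'" then have "v' \<in> d" using d(2) by simp
      then have "d = {a, v'} \<or> d = {a', v'}" using two_edges_at[OF fF e3 e4 n34, where w=v' and e=d] d(1) by simp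
      then show ?thesis using S_def by auto
    qed
  qed
  have vS: "v \<in> S" using S_def by simp
  have vU: "v \<in> \<Union> f" using e1 by blast
  have U1: "\<Union> f \<subseteq> S" by (rule cyc_closed[OF F_cyc[OF fF] vS vU cl])
  have U2: "S \<subseteq> \<Union> f" using e1 e2' e3 e4 S_def by blast
  have cS: "card S = 4" unfolding S_def using aa' vv' \<open>v \<noteq> a\<close> \<open>v \<noteq> a'\<close> \<open>a \<noteq> v'\<close> \<open>a' \<noteq> v'\<close> by auto
  have cf: "card f = 4" using cyc_card(2)[OF F_cyc[OF fF]] U1 U2 cS by simp
  have eE: "{v, a} \<in> E" using e1 fF F_E by blast
  obtain f1 g1 where fg: "f1 \<in> F" "g1 \<in> F" "f1 \<noteq> g1" "{v, a} \<in> f1" "{v, a} \<in> g1"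
    and oth: "\<And>h. h \<in> F \<Longrightarrow> {v, a} \<in> h \<Longrightarrow> h = f1 \<or> h = g1" using two_faces[OF eE] by blast
  obtain g where gF: "g \<in> F" "g \<noteq> f" "{v, a} \<in> g"
  proof (cases "f = f1")
    case True then show ?thesis using that fg by blast
  next
    case False then show ?thesis using that fg by blast
  qed
  have fgc: "col g \<noteq> col f" using col_adj[OF gF(1) fF gF(2) gF(3) e1] .
  have sg: "fimg \<sigma> g = g"
  proof -
    have "fimg \<sigma> g \<in> F" using G_face s(1) gF(1) by blast
    moreover have "{v, a} \<in> fimg \<sigma> g" using fimg_mem[OF gF(3), of \<sigma>] s(2,3) by (simp add: insert_commute)
    moreover have "col (fimg \<sigma> g) = col g" using col_G s(1) gF(1) by blast
    ultimately show ?thesis using faces_at_edge[OF eE fF gF(1) gF(2)[symmetric] e1 gF(3)] fgc by metis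
  qed
  have vg: "v \<in> \<Union> g" using gF(3) by blast
  obtain d1 d2 where d12: "d1 \<in> g" "d2 \<in> g" "d1 \<noteq> d2" "v \<in> d1" "v \<in> d2"
    using cyc_two[OF F_cyc[OF gF(1)] vg] by blast
  obtain d where d: "d \<in> g" "v \<in> d" "d \<noteq> {v, a}" using d12 by metis
  have dE: "d \<in> E" using d gF F_E by blast
  obtain b where b: "d = {v, b}" "b \<in> V" "adj v b" using edge_other[OF dE d(2)] by blast
  have ba: "b \<noteq> a" using d(3) b(1) by blast
  have ba': "b \<noteq> a'"
  proof
    assume "b = a'"
    then have "{v, a'} \<in> g" using d b by simp
    then show False using no_shared_angle[OF fF gF(1) gF(2)[symmetric] n12 e1 e2' gF(3)] by blast
  qed
  have eb: "{v, b} \<in> g" using d b by simp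
  have esb: "{a, \<sigma> b} \<in> g" using fimg_mem[OF eb, of \<sigma>] sg s(2) by simp
  have sbV: "\<sigma> b \<in> V" and asb: "adj a (\<sigma> b)" using face_edge[OF gF(1) esb] by auto
  have sbv: "\<sigma> b \<noteq> v" using G_inj[OF s(1) b(2) aV] s(3) ba by metis
  have sbv': "\<sigma> b \<noteq> v'"
  proof
    assume h: "\<sigma> b = v'"
    have "\<sigma> a' = v'" unfolding a'_def v'_def using G_tw[OF s(1) aV] s(3) by simp
    then have "b = a'" using G_inj[OF s(1) b(2) a'V] h by simp
    then show False using ba' by simp
  qed
  have chain: "(up b v \<and> up v a \<and> up a (\<sigma> b)) \<or> (up (\<sigma> b) a \<and> up a v \<and> up v b)"
  proof (cases "up v a")
    case True
    have "\<not> up v b" using up_same[OF vV aV b(2) True] ba ba' a'_def by blast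
    then have ub: "up b v" using b(3) adj_def by blast
    have "\<not> up (\<sigma> b) a"
    proof
      assume "up (\<sigma> b) a"
      then have "\<sigma> b = v \<or> \<sigma> b = tw v" using up_same2[OF aV vV sbV True] by blast
      then show False using sbv sbv' v'_def by blast
    qed
    then have "up a (\<sigma> b)" using asb adj_def by blast
    then show ?thesis using ub True by blast
  next
    case False
    then have uav: "up a v" using va adj_def by blast
    have "\<not> up b v" using up_same2[OF vV aV b(2) uav] ba ba' a'_def by blast
    then have ub: "up v b" using b(3) adj_def by blast
    have "\<not> up a (\<sigma> b)"
    proof
      assume "up a (\<sigma> b)"
      then have "\<sigma> b = v \<or> \<sigma> b = tw v" using up_same[OF aV vV sbV uav] by blast
      then show False using sbv sbv' v'_def by blast
    qed
    then have "up (\<sigma> b) a" using asb adj_def by blast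
    then show ?thesis using ub uav by blast
  qed
  have nadj: "\<not> adj b (\<sigma> b)"
  proof
    assume h: "adj b (\<sigma> b)"
    from chain show False
    proof
      assume c: "up b v \<and> up v a \<and> up a (\<sigma> b)"
      show False using ups3_not_adj[OF b(2) vV aV sbV] c h by blast
    next
      assume c: "up (\<sigma> b) a \<and> up a v \<and> up v b"
      have "adj (\<sigma> b) b" using h adj_def by blast
      then show False using ups3_not_adj[OF sbV aV vV b(2)] c by blast
    qed
  qed
  have cg: "card g \<noteq> 4"
  proof
    assume cg4: "card g = 4"
    have "\<Union> g \<subseteq> V" using F_V gF(1) by blast
    then have fing: "finite (\<Union> g)" using finite_V finite_subset by blast
    have cU: "card (\<Union> g) = 4" using cg4 cyc_card(2)[OF F_cyc[OF gF(1)]] by simp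
    have "v \<noteq> b" using adj_ne b vV by blast
    have "v \<noteq> a" by fact
    have ne_av: "{a, v} \<noteq> {a, \<sigma> b}" using sbv by (auto simp: doubleton_eq_iff)
    have ga: "{a, v} \<in> g" using gF(3) by (simp add: insert_commute)
    show False
    proof (cases "\<sigma> b = b")
      case True
      have eab: "{a, b} \<in> g" using esb True by simp
      have ebv: "{b, v} \<in> g" using eb by (simp add: insert_commute)
      define T where "T = {a, v, b}"
      have n1: "{a, v} \<noteq> {a, b}" using \<open>v \<noteq> b\<close> by (auto simp: doubleton_eq_iff)
      have n2: "{v, a} \<noteq> {v, b}" using ba by (auto simp: doubleton_eq_iff)
      have n3: "{b, v} \<noteq> {a, b}" using ba \<open>v \<noteq> a\<close> by (auto simp: doubleton_eq_iff)
      have cl: "dd \<subseteq> T" if dd: "dd \<in> g" "x \<in> dd" "x \<in> T" for dd x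
      proof -
        have "x = a \<or> x = v \<or> x = b" using dd(3) T_def by blast
        then show ?thesis
        proof (elim disjE)
          assume xx: "x = a" then have "a \<in> dd" using dd(2) by simp
      then have "dd = {a, v} \<or> dd = {a, b}" using two_edges_at[OF gF(1) ga eab n1, where w=a and e=dd] dd(1) by simp
          then show ?thesis using T_def by auto
        next
          assume xx: "x = v" then have "v \<in> dd" using dd(2) by simp
      then have "dd = {v, a} \<or> dd = {v, b}" using two_edges_at[OF gF(1) gF(3) eb n2, where w=v and e=dd] dd(1) by simp
          then show ?thesis using T_def by auto
        next
          assume xx: "x = b" then have "b \<in> dd" using dd(2) by simp
      then have "dd = {b, v} \<or> dd = {a, b}" using two_edges_at[OF gF(1) ebv eab n3, where w=b and e=dd] dd(1) by simp
          then show ?thesis using T_def by auto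
        qed
      qed
      have aT: "a \<in> T" using T_def by simp
      have aU: "a \<in> \<Union> g" using ga by blast
      have "\<Union> g \<subseteq> T" by (rule cyc_closed[OF F_cyc[OF gF(1)] aT aU cl])
      then have "card (\<Union> g) \<le> card T" by (simp add: card_mono T_def)
      moreover have "card T \<le> 3" unfolding T_def by (simp add: card_insert_le_m1)
      ultimately show False using cU by simp
    next
      case False
      have dist: "\<sigma> b \<noteq> a" using adj_ne[OF aV asb] by simp
      define T where "T = {b, \<sigma> b, a, v}"
      have TU: "T \<subseteq> \<Union> g" using eb esb ga T_def by blast
      have cT: "card T = 4" unfolding T_def using False dist sbv ba \<open>v \<noteq> b\<close> \<open>v \<noteq> a\<close>
        by (auto simp: card_insert_if)
      have TeU: "T = \<Union> g" using card_subset_eq[OF fing TU] cT cU by simp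
      have bU: "b \<in> \<Union> g" using eb by blast
      obtain q1 q2 where q: "q1 \<in> g" "q2 \<in> g" "q1 \<noteq> q2" "b \<in> q1" "b \<in> q2"
        using cyc_two[OF F_cyc[OF gF(1)] bU] by blast
      obtain dq where dq: "dq \<in> g" "b \<in> dq" "dq \<noteq> {v, b}" using q by metis
      have dqE: "dq \<in> E" using dq gF F_E by blast
      obtain q where qq: "dq = {b, q}" "q \<in> V" "adj b q" using edge_other[OF dqE dq(2)] by blast
      have qU: "q \<in> T" using TeU dq qq by blast
      have qb: "q \<noteq> b" using adj_ne[OF b(2) qq(3)] by simp
      have qv: "q \<noteq> v" using dq(3) qq(1) by (auto simp: insert_commute)
      have qa: "q \<noteq> a"
      proof
        assume "q = a"
        then have eab: "{a, b} \<in> g" using dq qq by (simp add: insert_commute)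
        have "{a, b} = {a, v} \<or> {a, b} = {a, \<sigma> b}"
          using two_edges_at[OF gF(1) ga esb ne_av, where w=a and e="{a, b}"] eab by simp
        then show False using \<open>v \<noteq> b\<close> False by (auto simp: doubleton_eq_iff)
      qed
      have "q = \<sigma> b" using qU qb qv qa T_def by blast
      then show False using nadj qq(3) by simp
    qed
  qed
  show ?thesis using gF(1) cg cf by auto
qed

end

locale RW1 = RW +
  assumes NoTw: "\<And>f v a. f \<in> F \<Longrightarrow> {v, a} \<in> f \<Longrightarrow> {v, tw a} \<notin> f"
begin

definition P :: "bool \<Rightarrow> bool \<times> nat \<Rightarrow> bool \<times> nat \<Rightarrow> bool \<times> nat" where
  "P c w u = (SOME z. z \<noteq> u \<and> {w, z} \<in> fc c {w, u})"

lemma side_lemma: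
  assumes "w \<in> V" "u \<in> V" "z \<in> V" "adj w u" "adj w z" "z \<noteq> u" "z \<noteq> tw u"
  shows "(up u w \<and> up w z) \<or> (up w u \<and> up z w)"
proof (cases "up u w")
  case True
  have "\<not> up z w" using up_same2[OF assms(1,2,3) True] assms(6,7) by blast
  then show ?thesis using True assms(5) adj_def by blast
next
  case False
  then have uw: "up w u" using assms(4) adj_def by blast
  have "\<not> up w z" using up_same[OF assms(1,2,3) uw] assms(6,7) by blast
  then show ?thesis using uw assms(5) adj_def by blast
qed

lemma P_spec:
  assumes "w \<in> V" "u \<in> V" "adj w u"
  shows "P c w u \<noteq> u" "{w, P c w u} \<in> fc c {w, u}"
    "\<And>z. z \<noteq> u \<Longrightarrow> {w, z} \<in> fc c {w, u} \<Longrightarrow> z = P c w u"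
proof -
  have eE: "{w, u} \<in> E" using edge_iff assms by blast
  define f where "f = fc c {w, u}"
  have f: "f \<in> F" "{w, u} \<in> f" "col f = c" using fc[OF eE] f_def by auto
  have wU: "w \<in> \<Union> f" using f by blast
  obtain d1 d2 where d: "d1 \<in> f" "d2 \<in> f" "d1 \<noteq> d2" "w \<in> d1" "w \<in> d2"
    using cyc_two[OF F_cyc[OF f(1)] wU] by blast
  obtain d where dd: "d \<in> f" "w \<in> d" "d \<noteq> {w, u}" using d by metis
  have dE: "d \<in> E" using dd f F_E by blast
  obtain z where z: "d = {w, z}" "z \<in> V" "adj w z" using edge_other[OF dE dd(2)] by blast
  have zu: "z \<noteq> u" using dd(3) z by blast
  have ex: "\<exists>z. z \<noteq> u \<and> {w, z} \<in> f" using zu z dd by blast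
  have uniq: "z1 = z2" if "z1 \<noteq> u" "{w, z1} \<in> f" "z2 \<noteq> u" "{w, z2} \<in> f" for z1 z2
  proof -
    have "{w, z1} = {w, u} \<or> {w, z1} = {w, z2} \<or> {w, u} = {w, z2}"
      using cyc_three[OF F_cyc[OF f(1)] that(2) f(2) that(4), of w] by simp
    then show ?thesis using that(1,3) edge_eq_other by metis
  qed
  have sp: "P c w u \<noteq> u \<and> {w, P c w u} \<in> f" unfolding P_def f_def[symmetric] using someI_ex[OF ex] .
  then show "P c w u \<noteq> u" "{w, P c w u} \<in> fc c {w, u}" using f_def by auto
  show "\<And>z. z \<noteq> u \<Longrightarrow> {w, z} \<in> fc c {w, u} \<Longrightarrow> z = P c w u"
    using uniq sp f_def by blast
qed

lemma P_V:
  assumes "w \<in> V" "u \<in> V" "adj w u"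
  shows "P c w u \<in> V \<and> adj w (P c w u)"
proof -
  have eE: "{w, u} \<in> E" using edge_iff assms by blast
  have "{w, P c w u} \<in> fc c {w, u}" using P_spec assms by blast
  then show ?thesis using face_edge fc[OF eE] by blast
qed

lemma fc_edge_same:
  assumes "w \<in> V" "u \<in> V" "adj w u" "{x, y} \<in> fc c {w, u}"
  shows "fc c {x, y} = fc c {w, u}"
proof -
  have eE: "{w, u} \<in> E" using edge_iff assms by blast
  have "fc (col (fc c {w, u})) {x, y} = fc c {w, u}" using fc_uniq fc[OF eE] assms(4) by blast
  then show ?thesis using fc[OF eE] by simp
qed

lemma P_inv:
  assumes "w \<in> V" "u \<in> V" "adj w u"
  shows "P c w (P c w u) = u"
proof -
  define z where "z = P c w u"
  have zV: "z \<in> V" "adj w z" using P_V assms z_def by auto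
  have e: "{w, z} \<in> fc c {w, u}" using P_spec assms z_def by blast
  have same: "fc c {w, z} = fc c {w, u}" using fc_edge_same[OF assms e] .
  have "u \<noteq> z" using P_spec assms z_def by metis
  moreover have "{w, u} \<in> fc c {w, z}" using same fc edge_iff assms by metis
  ultimately show ?thesis using P_spec(3)[OF assms(1) zV] z_def by metis
qed

lemma P_nottw:
  assumes "w \<in> V" "u \<in> V" "adj w u"
  shows "P c w u \<noteq> tw u"
proof
  assume h: "P c w u = tw u"
  have eE: "{w, u} \<in> E" using edge_iff assms by blast
  have "{w, tw u} \<in> fc c {w, u}" using P_spec(2)[OF assms, of c] h by simp
  then show False using NoTw fc[OF eE] by blast
qed

lemma P_side:
  assumes "w \<in> V" "u \<in> V" "adj w u"
  shows "(up u w \<and> up w (P c w u)) \<or> (up w u \<and> up (P c w u) w)"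
  using side_lemma[OF assms(1,2) _ assms(3)] P_V[OF assms] P_spec(1)[OF assms] P_nottw[OF assms] by blast

lemma same_side:
  assumes "w \<in> V" "u \<in> V" "adj w u" "z1 \<in> V" "z2 \<in> V"
    "(up u w \<and> up w z1) \<or> (up w u \<and> up z1 w)"
    "(up u w \<and> up w z2) \<or> (up w u \<and> up z2 w)"
  shows "z2 = z1 \<or> z2 = tw z1"
proof (cases "up u w")
  case True
  then have "up w z1" "up w z2" using assms(6,7) up_up_not assms(1,2) by blast+
  then show ?thesis using up_same assms by blast
next
  case False
  then have "up z1 w" "up z2 w" using assms(6,7) by blast+
  then show ?thesis using up_same2 assms by blast
qed

lemma P_col:
  assumes "w \<in> V" "u \<in> V" "adj w u"
  shows "P (\<not> c) w u = tw (P c w u)"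
proof -
  define z1 where "z1 = P c w u"
  define z2 where "z2 = P (\<not> c) w u"
  have V1: "z1 \<in> V" and V2: "z2 \<in> V" using P_V assms z1_def z2_def by auto
  have "z2 = z1 \<or> z2 = tw z1"
    using same_side[OF assms V1 V2] P_side[OF assms] z1_def z2_def by blast
  moreover have "z2 \<noteq> z1"
  proof
    assume h: "z2 = z1"
    have eE: "{w, u} \<in> E" using edge_iff assms by blast
    have f1: "fc c {w, u} \<in> F" "col (fc c {w, u}) = c" and f2: "fc (\<not> c) {w, u} \<in> F" "col (fc (\<not> c) {w, u}) = (\<not> c)"
      using fc[OF eE] by auto
    have ne: "fc c {w, u} \<noteq> fc (\<not> c) {w, u}" using f1(2) f2(2) by auto
    have a1: "{w, z1} \<in> fc c {w, u}" "{w, z1} \<in> fc (\<not> c) {w, u}" using P_spec(2)[OF assms] z1_def z2_def h by metis+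
    have "z1 \<noteq> u" using P_spec(1)[OF assms] z1_def by simp
    then have n: "{w, u} \<noteq> {w, z1}" using edge_eq_other by metis
    show False using no_shared_angle[OF f1(1) f2(1) ne n] fc[OF eE] a1 by blast
  qed
  ultimately have "z2 = tw z1" by blast
  then show ?thesis unfolding z1_def z2_def .
qed

lemma P_tu:
  assumes "w \<in> V" "u \<in> V" "adj w u"
  shows "P c w (tw u) = tw (P c w u)"
proof -
  have tuV: "tw u \<in> V" and atu: "adj w (tw u)" using tw_V adj_twin assms by auto
  define z1 where "z1 = P c w u"
  define z3 where "z3 = P c w (tw u)"
  have V1: "z1 \<in> V" and V3: "z3 \<in> V" using P_V assms tuV atu z1_def z3_def by auto
  have s1: "(up u w \<and> up w z1) \<or> (up w u \<and> up z1 w)" using P_side[OF assms] z1_def by blast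
  have s3: "(up (tw u) w \<and> up w z3) \<or> (up w (tw u) \<and> up z3 w)" using P_side[OF assms(1) tuV atu] z3_def by blast
  have s3': "(up u w \<and> up w z3) \<or> (up w u \<and> up z3 w)"
    using s3 bl_tw assms tuV unfolding up_def by auto
  have "z3 = z1 \<or> z3 = tw z1" using same_side[OF assms V1 V3 s1 s3'] .
  moreover have "z3 \<noteq> z1"
  proof
    assume h: "z3 = z1"
    have e1: "{w, z1} \<in> fc c {w, u}" using P_spec(2)[OF assms] z1_def by simp
    have e3: "{w, z1} \<in> fc c {w, tw u}" using P_spec(2)[OF assms(1) tuV atu] z3_def h by simp
    have "fc c {w, z1} = fc c {w, u}" using fc_edge_same[OF assms e1] .
    moreover have "fc c {w, z1} = fc c {w, tw u}" using fc_edge_same[OF assms(1) tuV atu e3] .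
    ultimately have "fc c {w, tw u} = fc c {w, u}" by simp
    moreover have eE: "{w, tw u} \<in> E" using edge_iff assms(1) tuV atu by blast
    ultimately have "{w, tw u} \<in> fc c {w, u}" using fc by metis
    moreover have "{w, u} \<in> E" using edge_iff assms by blast
    ultimately show False using NoTw fc by blast
  qed
  ultimately have "z3 = tw z1" by blast
  then show ?thesis unfolding z1_def z3_def .
qed

lemma P_tw_cases:
  assumes "w \<in> V" "u \<in> V" "adj w u"
  shows "P c (tw w) u = P c w u \<or> P c (tw w) u = tw (P c w u)"
proof -
  have twV: "tw w \<in> V" and atw: "adj (tw w) u" using tw_V adj_twin assms by auto
  define z1 where "z1 = P c w u"
  define z2 where "z2 = P c (tw w) u"
  have V1: "z1 \<in> V" and V2: "z2 \<in> V" using P_V assms twV atw z1_def z2_def by auto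
  have s1: "(up u w \<and> up w z1) \<or> (up w u \<and> up z1 w)" using P_side[OF assms] z1_def by blast
  have s2: "(up u (tw w) \<and> up (tw w) z2) \<or> (up (tw w) u \<and> up z2 (tw w))" using P_side[OF twV assms(2) atw] z2_def by blast
  have s2': "(up u w \<and> up w z2) \<or> (up w u \<and> up z2 w)"
    using s2 bl_tw assms twV unfolding up_def by auto
  have "z2 = z1 \<or> z2 = tw z1" using same_side[OF assms V1 V2 s1 s2'] .
  then show ?thesis unfolding z1_def z2_def .
qed

lemma P_G:
  assumes "G \<sigma>" "w \<in> V" "u \<in> V" "adj w u"
  shows "P c (\<sigma> w) (\<sigma> u) = \<sigma> (P c w u)"
proof -
  have eE: "{w, u} \<in> E" using edge_iff assms by blast
  define f where "f = fc c {w, u}"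
  have f: "f \<in> F" "{w, u} \<in> f" "col f = c" using fc[OF eE] f_def by auto
  have sw: "\<sigma> w \<in> V" and su: "\<sigma> u \<in> V" using G_V assms by auto
  have asu: "adj (\<sigma> w) (\<sigma> u)" using G_adj' assms by blast
  have gf: "fimg \<sigma> f \<in> F" "col (fimg \<sigma> f) = c" using G_face col_G assms(1) f by auto
  have "{\<sigma> w, \<sigma> u} \<in> fimg \<sigma> f" using fimg_mem[OF f(2), of \<sigma>] by simp
  then have "fc (col (fimg \<sigma> f)) {\<sigma> w, \<sigma> u} = fimg \<sigma> f" by (rule fc_uniq[OF gf(1)])
  then have fcs: "fc c {\<sigma> w, \<sigma> u} = fimg \<sigma> f" using gf(2) by simp
  define z where "z = P c w u"
  have zV: "z \<in> V" using P_V assms z_def by blast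
  have "{w, z} \<in> f" using P_spec(2)[OF assms(2-4)] z_def f_def by simp
  then have "{\<sigma> w, \<sigma> z} \<in> fc c {\<sigma> w, \<sigma> u}" using fimg_mem[of "{w, z}" f \<sigma>] fcs by simp
  moreover have "\<sigma> z \<noteq> \<sigma> u" using G_inj[OF assms(1) zV assms(3)] P_spec(1)[OF assms(2-4)] z_def by metis
  ultimately have "\<sigma> z = P c (\<sigma> w) (\<sigma> u)" by (rule P_spec(3)[OF sw su asu, rotated])
  then show ?thesis using z_def by simp
qed

end

context RW1
begin

definition sp :: "bool \<times> nat \<Rightarrow> bool \<Rightarrow> bool \<times> nat \<Rightarrow> bool" where
  "sp w c u \<longleftrightarrow> P c (tw w) u \<noteq> P c w u"

lemma tw_inj_iff: "x \<in> V \<Longrightarrow> y \<in> V \<Longrightarrow> tw x = tw y \<longleftrightarrow> x = y"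
  using tw_inj by blast

lemma sp_col:
  assumes "w \<in> V" "u \<in> V" "adj w u"
  shows "sp w (\<not> c) u = sp w c u"
proof -
  have twV: "tw w \<in> V" and atw: "adj (tw w) u" using tw_V adj_twin assms by auto
  have "P (\<not> c) (tw w) u = tw (P c (tw w) u)" using P_col[OF twV assms(2) atw] .
  moreover have "P (\<not> c) w u = tw (P c w u)" using P_col[OF assms] .
  moreover have "P c (tw w) u \<in> V" "P c w u \<in> V" using P_V assms twV atw by auto
  ultimately show ?thesis unfolding sp_def using tw_inj_iff by simp
qed

lemma sp_tu:
  assumes "w \<in> V" "u \<in> V" "adj w u"
  shows "sp w c (tw u) = sp w c u"
proof -
  have twV: "tw w \<in> V" and atw: "adj (tw w) u" using tw_V adj_twin assms by auto
  have "P c (tw w) (tw u) = tw (P c (tw w) u)" using P_tu[OF twV assms(2) atw] .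
  moreover have "P c w (tw u) = tw (P c w u)" using P_tu[OF assms] .
  moreover have "P c (tw w) u \<in> V" "P c w u \<in> V" using P_V assms twV atw by auto
  ultimately show ?thesis unfolding sp_def using tw_inj_iff by simp
qed

lemma sp_P:
  assumes "w \<in> V" "u \<in> V" "adj w u"
  shows "sp w c (P c w u) = sp w c u"
proof -
  have twV: "tw w \<in> V" and atw: "adj (tw w) u" using tw_V adj_twin assms by auto
  define z where "z = P c w u"
  define y where "y = P c (tw w) u"
  have zV: "z \<in> V" "adj w z" using P_V assms z_def by auto
  have yV: "y \<in> V" "adj (tw w) y" using P_V twV assms(2) atw y_def by auto
  have Pwz: "P c w z = u" using P_inv[OF assms] z_def by simp
  have Ptwy: "P c (tw w) y = u" using P_inv[OF twV assms(2) atw] y_def by simp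
  have "y = z \<or> y = tw z" using P_tw_cases[OF assms] z_def y_def by simp
  then show ?thesis
  proof
    assume yz: "y = z"
    then have "P c (tw w) z = P c w z" using Pwz Ptwy by simp
    moreover have "\<not> sp w c u" using yz unfolding sp_def y_def z_def by simp
    ultimately show ?thesis unfolding sp_def z_def[symmetric] by simp
  next
    assume yz: "y = tw z"
    have atz: "adj (tw w) z" using adj_twin[OF assms(1) zV(1) zV(2)] by blast
    have "P c (tw w) (tw z) = tw (P c (tw w) z)" using P_tu[OF twV zV(1) atz] .
    then have "tw (P c (tw w) z) = u" using Ptwy yz by simp
    then have "P c (tw w) z = tw u" using tw_tw P_V[OF twV zV(1) atz] by metis
    then have "P c (tw w) z \<noteq> P c w z" using Pwz tw_ne by metis
    moreover have "sp w c u" unfolding sp_def using yz y_def z_def tw_ne by metis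
    ultimately show ?thesis unfolding sp_def z_def[symmetric] by simp
  qed
qed

lemma nbr_cases:
  assumes "w \<in> V" "u \<in> V" "adj w u" "u' \<in> V" "adj w u'"
  shows "u' = u \<or> u' = tw u \<or> u' = P c w u \<or> u' = tw (P c w u)"
proof -
  have zV: "P c w u \<in> V" using P_V assms by blast
  have side: "(up u w \<and> up w (P c w u)) \<or> (up w u \<and> up (P c w u) w)" using P_side[OF assms(1-3)] .
  show ?thesis
  proof (cases "up w u'")
    case True
    show ?thesis
    proof (cases "up w u")
      case True
      then show ?thesis using up_same[OF assms(1,2,4)] \<open>up w u'\<close> by blast
    next
      case False
      then have "up w (P c w u)" using side by blast
      then show ?thesis using up_same[OF assms(1) zV assms(4)] \<open>up w u'\<close> by blast
    qed
  next
    case False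
    then have u'w: "up u' w" using assms(5) adj_def by blast
    show ?thesis
    proof (cases "up u w")
      case True
      then show ?thesis using up_same2[OF assms(1,2,4)] u'w by blast
    next
      case False
      then have "up (P c w u) w" using side assms(3) adj_def by blast
      then show ?thesis using up_same2[OF assms(1) zV assms(4)] u'w by blast
    qed
  qed
qed

lemma sp_local:
  assumes "w \<in> V" "u \<in> V" "adj w u" "u' \<in> V" "adj w u'"
  shows "sp w c' u' = sp w c u"
proof -
  have zV: "P c w u \<in> V" "adj w (P c w u)" using P_V assms by auto
  have "sp w c u' = sp w c u"
    using nbr_cases[OF assms, of c] sp_tu[OF assms(1-3)] sp_P[OF assms(1-3)] sp_tu[OF assms(1) zV] sp_P[OF assms(1-3)]
    by metis
  moreover have "sp w c' u' = sp w c u'"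
    using sp_col[OF assms(1,4,5)] by (cases "c' = c") auto
  ultimately show ?thesis by simp
qed

lemma sp_G:
  assumes "G \<sigma>" "w \<in> V" "u \<in> V" "adj w u"
  shows "sp (\<sigma> w) c (\<sigma> u) = sp w c u"
proof -
  have twV: "tw w \<in> V" and atw: "adj (tw w) u" using tw_V adj_twin assms by auto
  have "P c (tw (\<sigma> w)) (\<sigma> u) = P c (\<sigma> (tw w)) (\<sigma> u)" using G_tw assms by simp
  also have "\<dots> = \<sigma> (P c (tw w) u)" using P_G[OF assms(1) twV assms(3) atw] .
  finally have a: "P c (tw (\<sigma> w)) (\<sigma> u) = \<sigma> (P c (tw w) u)" .
  have b: "P c (\<sigma> w) (\<sigma> u) = \<sigma> (P c w u)" using P_G[OF assms] .
  have V1: "P c (tw w) u \<in> V" and V2: "P c w u \<in> V" using P_V assms twV atw by auto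
  show ?thesis unfolding sp_def a b using G_inj[OF assms(1) V1 V2] by metis
qed

definition w0 :: "bool \<times> nat" where "w0 = (True, 0)"
definition s :: bool where "s = sp w0 True (upT w0)"

lemma w0V: "w0 \<in> V" unfolding w0_def using npos by (simp add: inV)

lemma sp_const:
  assumes "w \<in> V" "u \<in> V" "adj w u"
  shows "sp w c u = s"
proof -
  have u0: "upT w0 \<in> V" "adj w0 (upT w0)" using upT_V up_upT w0V adj_def by auto
  have "(w0, w) \<in> {(x, y). {x, y} \<in> E}\<^sup>*" using pm_conn w0V assms(1) unfolding graph_connected_def by blast
  then have "w \<in> V \<and> (\<forall>c u. u \<in> V \<longrightarrow> adj w u \<longrightarrow> sp w c u = s)"
  proof (induction rule: rtrancl_induct)
    case base
    show ?case using w0V sp_local[OF w0V u0(1) u0(2)] unfolding s_def by blast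
  next
    case (step x y)
    have xy: "{x, y} \<in> E" using step(2) by simp
    have xV: "x \<in> V" and yV: "y \<in> V" using E_V xy by auto
    have axy: "adj x y" using edge_iff xV yV xy by blast
    obtain f where f: "f \<in> F" "{x, y} \<in> f" using fc[OF xy] by blast
    obtain \<sigma> where sg: "G \<sigma>" "\<sigma> x = y" using refl_edge[OF f] by metis
    have "sp y c u' = s" if u': "u' \<in> V" "adj y u'" for c u'
    proof -
      obtain u where u: "u \<in> V" "\<sigma> u = u'" using G_surj[OF sg(1) u'(1)] by blast
      have axu: "adj x u" using G_adj'[OF sg(1) xV u(1)] sg(2) u(2) u' by simp
      have "sp y c u' = sp x c u" using sp_G[OF sg(1) xV u(1) axu] sg(2) u(2) by simp
      also have "\<dots> = s" using step(3) u(1) axu by blast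
      finally show ?thesis .
    qed
    then show ?case using yV by blast
  qed
  then show ?thesis using assms by blast
qed

definition tp :: "bool \<Rightarrow> bool \<times> nat \<Rightarrow> bool \<times> nat" where
  "tp d x = (if d then tw x else x)"

lemma tp_V: "x \<in> V \<Longrightarrow> tp d x \<in> V" unfolding tp_def using tw_V by auto
lemma tp_tp: "x \<in> V \<Longrightarrow> tp a (tp b x) = tp (a \<noteq> b) x" unfolding tp_def using tw_tw by auto
lemma bl_tp: "x \<in> V \<Longrightarrow> bl (tp d x) = bl x" unfolding tp_def using bl_tw by auto
lemma adj_tp: "x \<in> V \<Longrightarrow> y \<in> V \<Longrightarrow> adj (tp a x) (tp b y) \<longleftrightarrow> adj x y"
  unfolding adj_def up_def using bl_tp by simp
lemma up_tp: "x \<in> V \<Longrightarrow> y \<in> V \<Longrightarrow> up (tp a x) (tp b y) \<longleftrightarrow> up x y"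
  unfolding up_def using bl_tp by simp

lemma P_twin_w:
  assumes "w \<in> V" "u \<in> V" "adj w u"
  shows "P c (tw w) u = tp s (P c w u)"
  using P_tw_cases[OF assms, of c] sp_const[OF assms, of c] unfolding sp_def tp_def by auto

lemma P_gen:
  assumes "w \<in> V" "u \<in> V" "adj w u"
  shows "P c' (tp a w) (tp b u) = tp ((c \<noteq> c') \<noteq> ((s \<and> a) \<noteq> b)) (P c w u)"
proof -
  have taw: "tp a w \<in> V" "adj (tp a w) u" using tp_V adj_tp[OF assms(1,2), of a False] assms by (auto simp: tp_def)
  have zV: "P c w u \<in> V" using P_V assms by blast
  have s1: "P c' (tp a w) (tp b u) = tp b (P c' (tp a w) u)"
    using P_tu[OF taw(1) assms(2) taw(2)] by (simp add: tp_def)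
  have s2: "P c' (tp a w) u = tp (s \<and> a) (P c' w u)"
    using P_twin_w[OF assms] by (cases a) (auto simp: tp_def)
  have s3: "P c' w u = tp (c \<noteq> c') (P c w u)"
    using P_col[OF assms, of c] by (cases "c = c'") (auto simp: tp_def)
  have "P c' (tp a w) (tp b u) = tp b (tp (s \<and> a) (tp (c \<noteq> c') (P c w u)))" using s1 s2 s3 by simp
  also have "\<dots> = tp (b \<noteq> ((s \<and> a) \<noteq> (c \<noteq> c'))) (P c w u)" using tp_tp zV tp_V by simp
  finally show ?thesis by (cases b; cases "s \<and> a"; cases "c = c'") auto
qed

end

context RW1
begin

fun wk :: "bool \<Rightarrow> bool \<times> nat \<Rightarrow> bool \<times> nat \<Rightarrow> nat \<Rightarrow> bool \<times> nat" where
  "wk c u w 0 = u"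
| "wk c u w (Suc k) = wk c w (P c w u) k"

lemma adj_sym: "adj x y \<Longrightarrow> adj y x" unfolding adj_def by blast

lemma wk_1: "wk c u w (Suc 0) = w" by simp

lemma wk_V:
  assumes "u \<in> V" "w \<in> V" "adj u w"
  shows "wk c u w k \<in> V \<and> adj (wk c u w k) (wk c u w (Suc k))"
  using assms
proof (induction k arbitrary: u w)
  case 0 then show ?case by simp
next
  case (Suc k)
  have "P c w u \<in> V \<and> adj w (P c w u)" using P_V Suc.prems adj_sym by blast
  then show ?case using Suc.IH[of w "P c w u"] Suc.prems by simp
qed

lemma wk_in:
  assumes "u \<in> V" "w \<in> V" "adj u w"
  shows "wk c u w k \<in> V"
  using wk_V[OF assms] by blast

lemma wk_rec:
  assumes "u \<in> V" "w \<in> V" "adj u w"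
  shows "wk c u w (Suc (Suc k)) = P c (wk c u w (Suc k)) (wk c u w k)"
  using assms
proof (induction k arbitrary: u w)
  case 0 then show ?case by simp
next
  case (Suc k)
  have "P c w u \<in> V \<and> adj w (P c w u)" using P_V Suc.prems adj_sym by blast
  then show ?case using Suc.IH[of w "P c w u"] Suc.prems by simp
qed

lemma wk_shift: "wk c u w (m + k) = wk c (wk c u w m) (wk c u w (Suc m)) k"
proof (induction m arbitrary: u w)
  case 0 then show ?case by simp
next
  case (Suc m)
  show ?case using Suc.IH[of w "P c w u"] by simp
qed

lemma wk_up:
  assumes "u \<in> V" "w \<in> V" "up u w"
  shows "up (wk c u w k) (wk c u w (Suc k))"
  using assms
proof (induction k arbitrary: u w)
  case 0 then show ?case by simp
next
  case (Suc k)
  have a: "adj w u" using Suc.prems adj_def by blast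
  have "P c w u \<in> V" using P_V Suc.prems a by blast
  moreover have "up w (P c w u)" using P_side[OF Suc.prems(2,1) a] Suc.prems up_up_not by blast
  ultimately show ?case using Suc.IH[of w "P c w u"] Suc.prems by simp
qed

lemma wk_bl:
  assumes "u \<in> V" "w \<in> V" "up u w"
  shows "int n dvd (bl (wk c u w k) - bl u - int k)"
proof (induction k)
  case 0 then show ?case by simp
next
  case (Suc k)
  have a: "adj u w" using assms adj_def by blast
  have V1: "wk c u w k \<in> V" "wk c u w (Suc k) \<in> V" using wk_in[OF assms(1,2) a] by (blast, blast)
  have "int n dvd (bl (wk c u w (Suc k)) - bl (wk c u w k) - 1)"
    using up_dvd[OF V1] wk_up[OF assms] by blast
  then have "int n dvd ((bl (wk c u w (Suc k)) - bl (wk c u w k) - 1) + (bl (wk c u w k) - bl u - int k))"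
    using Suc.IH dvd_add by blast
  then show ?case by (simp add: algebra_simps)
qed

lemma wk_face:
  assumes "u \<in> V" "w \<in> V" "adj u w"
  shows "{wk c u w k, wk c u w (Suc k)} \<in> fc c {u, w}"
  using assms
proof (induction k arbitrary: u w)
  case 0
  have "{u, w} \<in> E" using edge_iff 0 by blast
  then show ?case using fc by simp
next
  case (Suc k)
  have a: "adj w u" using Suc.prems adj_sym by blast
  have zV: "P c w u \<in> V" "adj w (P c w u)" using P_V Suc.prems a by auto
  have "{wk c w (P c w u) k, wk c w (P c w u) (Suc k)} \<in> fc c {w, P c w u}"
    using Suc.IH[OF Suc.prems(2) zV] .
  moreover have "fc c {w, P c w u} = fc c {w, u}"
    using fc_edge_same[OF Suc.prems(2,1) a P_spec(2)[OF Suc.prems(2,1) a]] .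
  moreover have "{w, u} = {u, w}" by auto
  ultimately show ?case by simp
qed

lemma wk_ne2:
  assumes "u \<in> V" "w \<in> V" "adj u w"
  shows "wk c u w k \<noteq> wk c u w (Suc (Suc k))"
proof -
  have V: "wk c u w (Suc k) \<in> V" "wk c u w k \<in> V" "adj (wk c u w (Suc k)) (wk c u w k)"
    using wk_V[OF assms] adj_sym by blast+
  show ?thesis using wk_rec[OF assms] P_spec(1)[OF V] by metis
qed

lemma wk_back:
  assumes "u \<in> V" "w \<in> V" "adj u w"
  shows "wk c u w k = P c (wk c u w (Suc k)) (wk c u w (Suc (Suc k)))"
proof -
  have V: "wk c u w (Suc k) \<in> V" "wk c u w k \<in> V" "adj (wk c u w (Suc k)) (wk c u w k)"
    using wk_V[OF assms] adj_sym by blast+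
  show ?thesis using wk_rec[OF assms] P_inv[OF V] by metis
qed

lemma wk_period:
  assumes "u \<in> V" "w \<in> V" "adj u w"
  obtains p where "p > 0" "wk c u w p = u" "wk c u w (Suc p) = w"
proof -
  define h where "h k = (wk c u w k, wk c u w (Suc k))" for k
  define N where "N = card (V \<times> V)"
  have fin: "finite (V \<times> V)" using finite_V by simp
  have sub: "h ` {0..N} \<subseteq> V \<times> V"
  proof
    fix x assume "x \<in> h ` {0..N}"
    then obtain k where "x = h k" by blast
    then show "x \<in> V \<times> V" unfolding h_def using wk_in[OF assms, of c k] wk_in[OF assms, of c "Suc k"] by blast
  qed
  have "\<not> inj_on h {0..N}"
  proof
    assume "inj_on h {0..N}"
    then have "card {0..N} \<le> card (V \<times> V)" using card_inj_on_le[OF _ sub fin] by blast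
    then show False unfolding N_def by simp
  qed
  then obtain i j where ij: "i \<in> {0..N}" "j \<in> {0..N}" "i \<noteq> j" "h i = h j" unfolding inj_on_def by blast
  obtain a b where ab: "a < b" "h a = h b"
  proof (cases "i < j")
    case True then show ?thesis using that ij by blast
  next
    case False then have "j < i" using ij by simp
    then show ?thesis using that ij by metis
  qed
  have hback: "h k = h l" if "h (Suc k) = h (Suc l)" for k l
  proof -
    have "wk c u w k = wk c u w l"
      using wk_back[OF assms, of c k] wk_back[OF assms, of c l] that unfolding h_def by simp
    moreover have "wk c u w (Suc k) = wk c u w (Suc l)" using that unfolding h_def by simp
    ultimately show ?thesis unfolding h_def by simp
  qed
  have "h (a - m) = h (b - m)" if "m \<le> a" for m
    using that
  proof (induction m)
    case 0 then show ?case using ab by simp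
  next
    case (Suc m)
    then have "h (a - m) = h (b - m)" by simp
    moreover have "a - m = Suc (a - Suc m)" "b - m = Suc (b - Suc m)" using Suc.prems ab by auto
    ultimately show ?case using hback by metis
  qed
  then have "h 0 = h (b - a)" by (metis diff_self_eq_0 order_refl)
  then show ?thesis using that[of "b - a"] ab unfolding h_def by simp
qed

end

context RW1
begin

declare wk.simps(2) [simp del]

lemma wk_per:
  assumes "wk c u w p = u" "wk c u w (Suc p) = w"
  shows "wk c u w (p + k) = wk c u w k"
  using wk_shift[of c u w p k] assms by simp

lemma face_vertex:
  assumes "u \<in> V" "w \<in> V" "adj u w" "x \<in> range (wk c u w)" "e \<in> fc c {u, w}" "x \<in> e"
  shows "\<exists>m. e = {wk c u w m, wk c u w (Suc m)}"
proof -
  obtain p where p: "p > 0" "wk c u w p = u" "wk c u w (Suc p) = w" using wk_period[OF assms(1-3)] by metis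
  obtain k where k: "x = wk c u w k" using assms(4) by blast
  define m where "m = p + k - 1"
  have "Suc m = p + k" using p(1) m_def by simp
  then have xm: "x = wk c u w (Suc m)" using wk_per[OF p(2,3)] k by simp
  have eE: "{u, w} \<in> E" using edge_iff assms by blast
  have fF: "fc c {u, w} \<in> F" using fc[OF eE] by blast
  have e1: "{wk c u w m, wk c u w (Suc m)} \<in> fc c {u, w}" using wk_face[OF assms(1-3)] .
  have e2: "{wk c u w (Suc m), wk c u w (Suc (Suc m))} \<in> fc c {u, w}" using wk_face[OF assms(1-3)] .
  have ne: "{wk c u w m, wk c u w (Suc m)} \<noteq> {wk c u w (Suc m), wk c u w (Suc (Suc m))}"
  proof
    assume h: "{wk c u w m, wk c u w (Suc m)} = {wk c u w (Suc m), wk c u w (Suc (Suc m))}"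
    have "wk c u w m \<noteq> wk c u w (Suc (Suc m))" using wk_ne2[OF assms(1-3)] .
    moreover have "wk c u w m \<noteq> wk c u w (Suc m)"
      using adj_ne wk_V[OF assms(1-3), of c m] by blast
    ultimately show False using h by (auto simp: doubleton_eq_iff)
  qed
  have "e = {wk c u w m, wk c u w (Suc m)} \<or> e = {wk c u w (Suc m), wk c u w (Suc (Suc m))}"
    using two_edges_at[OF fF e1 e2 ne, where w = x and e = e] xm assms(5,6) by simp
  then show ?thesis by blast
qed

lemma face_range:
  assumes "u \<in> V" "w \<in> V" "adj u w"
  shows "\<Union> (fc c {u, w}) = range (wk c u w)"
proof
  have eE: "{u, w} \<in> E" using edge_iff assms by blast
  have fF: "fc c {u, w} \<in> F" using fc[OF eE] by blast
  have cl: "e \<subseteq> range (wk c u w)" if th: "e \<in> fc c {u, w}" "x \<in> e" "x \<in> range (wk c u w)" for e x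
  proof -
    obtain m where m: "e = {wk c u w m, wk c u w (Suc m)}" using face_vertex[OF assms th(3,1,2)] by blast
    have "wk c u w m \<in> range (wk c u w)" "wk c u w (Suc m) \<in> range (wk c u w)" by (rule rangeI)+
    then show ?thesis using m by blast
  qed
  have uS: "u \<in> range (wk c u w)" by (metis rangeI wk.simps(1))
  have uU: "u \<in> \<Union> (fc c {u, w})" using fc[OF eE] by blast
  show "\<Union> (fc c {u, w}) \<subseteq> range (wk c u w)" by (rule cyc_closed[OF F_cyc[OF fF] uS uU cl])
  show "range (wk c u w) \<subseteq> \<Union> (fc c {u, w})"
  proof
    fix x assume "x \<in> range (wk c u w)"
    then obtain k where "x = wk c u w k" by blast
    then show "x \<in> \<Union> (fc c {u, w})" using wk_face[OF assms, of c k] by blast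
  qed
qed

lemma face_walk:
  assumes "u \<in> V" "w \<in> V" "adj u w"
  shows "fc c {u, w} = range (\<lambda>k. {wk c u w k, wk c u w (Suc k)})"
proof
  show "range (\<lambda>k. {wk c u w k, wk c u w (Suc k)}) \<subseteq> fc c {u, w}" using wk_face[OF assms] by blast
  show "fc c {u, w} \<subseteq> range (\<lambda>k. {wk c u w k, wk c u w (Suc k)})"
  proof
    fix e assume e: "e \<in> fc c {u, w}"
    have eE: "{u, w} \<in> E" using edge_iff assms by blast
    have fF: "fc c {u, w} \<in> F" using fc[OF eE] by blast
    obtain x y where xy: "e = {x, y}" using cyc_edge[OF F_cyc[OF fF] e] by blast
    have "x \<in> range (wk c u w)" using face_range[OF assms, of c] e xy by blast
    then obtain m where "e = {wk c u w m, wk c u w (Suc m)}" using face_vertex[OF assms _ e] xy by blast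
    then show "e \<in> range (\<lambda>k. {wk c u w k, wk c u w (Suc k)})" by blast
  qed
qed

lemma wk_same_bl:
  assumes "u \<in> V" "w \<in> V" "up u w" "wk c u w i = wk c u w j"
  shows "int n dvd (int i - int j)"
proof -
  have a: "int n dvd (bl (wk c u w i) - bl u - int i)" "int n dvd (bl (wk c u w j) - bl u - int j)"
    using wk_bl[OF assms(1-3)] by blast+
  then have "int n dvd ((bl (wk c u w j) - bl u - int j) - (bl (wk c u w i) - bl u - int i))"
    using dvd_diff by blast
  then show ?thesis using assms(4) by (simp add: algebra_simps)
qed

lemma wk_n_cases:
  assumes "u \<in> V" "w \<in> V" "up u w"
  shows "wk c u w n = u \<or> wk c u w n = tw u"
proof -
  have a: "adj u w" using assms adj_def by blast
  have V1: "wk c u w n \<in> V" using wk_in[OF assms(1,2) a] .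
  have "int n dvd (bl (wk c u w n) - bl u - int n)" using wk_bl[OF assms] .
  then have "int n dvd ((bl (wk c u w n) - bl u - int n) + int n)" using dvd_add dvd_refl by blast
  then have "int n dvd (bl (wk c u w n) - bl u)" by simp
  then have "bl u = bl (wk c u w n)" using same_dvd[OF assms(1) V1] by simp
  then show ?thesis using bl_eq[OF assms(1) V1] by blast
qed

lemma wk_mod:
  assumes "wk c u w n = u" "wk c u w (Suc n) = w"
  shows "wk c u w (n * q + r) = wk c u w r"
proof (induction q)
  case 0 then show ?case by simp
next
  case (Suc q)
  have e: "n * Suc q + r = n + (n * q + r)" by simp
  have "wk c u w (n * Suc q + r) = wk c u w (n + (n * q + r))" by (simp only: e)
  also have "\<dots> = wk c u w (n * q + r)" by (rule wk_per[OF assms])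
  also have "\<dots> = wk c u w r" by (rule Suc.IH)
  finally show ?case .
qed

lemma face_len:
  assumes "u \<in> V" "w \<in> V" "up u w"
  shows "card (fc c {u, w}) = n \<longleftrightarrow> wk c u w n = u"
proof -
  have a: "adj u w" using assms adj_def by blast
  have eE: "{u, w} \<in> E" using edge_iff assms(1,2) a by blast
  have fF: "fc c {u, w} \<in> F" using fc[OF eE] by blast
  have cf: "card (fc c {u, w}) = card (range (wk c u w))"
    using cyc_card(2)[OF F_cyc[OF fF]] face_range[OF assms(1,2) a] by simp
  have rV: "range (wk c u w) \<subseteq> V" using wk_in[OF assms(1,2) a] by blast
  have finr: "finite (range (wk c u w))" using finite_subset[OF rV finite_V] .
  show ?thesis
  proof
    assume h: "card (fc c {u, w}) = n"
    show "wk c u w n = u"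
    proof (rule ccontr)
      assume ne: "wk c u w n \<noteq> u"
      have inj: "inj_on (wk c u w) {..n}"
      proof
        fix i j assume ij: "i \<in> {..n}" "j \<in> {..n}" "wk c u w i = wk c u w j"
        show "i = j"
        proof (rule ccontr)
          assume "i \<noteq> j"
          then consider "i < j" | "j < i" by linarith
          then show False
          proof cases
            case 1
            have "int n dvd (int j - int i)" using wk_same_bl[OF assms, of c j i] ij by simp
            then have "int n dvd ((int j - int i) - int n)" using dvd_diff dvd_refl by blast
            then have "int j - int i - int n = 0" using ij 1 by (intro int_dvd_small) auto
            then have "i = 0" "j = n" using ij by auto
            then show False using ij ne by simp
          next
            case 2
            have "int n dvd (int i - int j)" using wk_same_bl[OF assms, of c i j] ij by simp
            then have "int n dvd ((int i - int j) - int n)" using dvd_diff dvd_refl by blast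
            then have "int i - int j - int n = 0" using ij 2 by (intro int_dvd_small) auto
            then have "j = 0" "i = n" using ij by auto
            then show False using ij ne by simp
          qed
        qed
      qed
      have "card (wk c u w ` {..n}) = Suc n" using card_image[OF inj] by simp
      moreover have "card (wk c u w ` {..n}) \<le> card (range (wk c u w))"
      proof -
        have sub: "wk c u w ` {..n} \<subseteq> range (wk c u w)" by (rule image_mono) simp
        show ?thesis by (rule card_mono[OF finr sub])
      qed
      ultimately show False using h cf by simp
    qed
  next
    assume h: "wk c u w n = u"
    have s1: "up u (wk c u w (Suc n))" using wk_up[OF assms, of c n] h by simp
    have s1V: "wk c u w (Suc n) \<in> V" using wk_in[OF assms(1,2) a] .
    have "wk c u w (Suc n) = w \<or> wk c u w (Suc n) = tw w" using up_same[OF assms(1,2) s1V assms(3) s1] .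
    moreover have "wk c u w (Suc n) \<noteq> tw w"
    proof
      assume h2: "wk c u w (Suc n) = tw w"
      have "{wk c u w n, wk c u w (Suc n)} \<in> fc c {u, w}" using wk_face[OF assms(1,2) a] .
      then have "{u, tw w} \<in> fc c {u, w}" using h h2 by simp
      then show False using NoTw fc[OF eE] by blast
    qed
    ultimately have h2: "wk c u w (Suc n) = w" by simp
    have rng: "range (wk c u w) = wk c u w ` {..<n}"
    proof
      show "range (wk c u w) \<subseteq> wk c u w ` {..<n}"
      proof
        fix x assume "x \<in> range (wk c u w)"
        then obtain k where k: "x = wk c u w k" by blast
        have "k = n * (k div n) + k mod n" by simp
        then have "wk c u w k = wk c u w (k mod n)" using wk_mod[OF h h2, of "k div n" "k mod n"] by metis
        moreover have "k mod n < n" using npos by simp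
        ultimately show "x \<in> wk c u w ` {..<n}" using k by blast
      qed
    qed auto
    have inj: "inj_on (wk c u w) {..<n}"
    proof
      fix i j assume ij: "i \<in> {..<n}" "j \<in> {..<n}" "wk c u w i = wk c u w j"
      have "int n dvd (int i - int j)" using wk_same_bl[OF assms] ij by blast
      then have "int i - int j = 0" using ij by (intro int_dvd_small) auto
      then show "i = j" by simp
    qed
    show "card (fc c {u, w}) = n" using cf rng card_image[OF inj] by simp
  qed
qed

fun D :: "bool \<Rightarrow> bool \<Rightarrow> bool \<Rightarrow> nat \<Rightarrow> bool" where
  "D e d0 d1 0 = d0"
| "D e d0 d1 (Suc k) = D e d1 (e \<noteq> ((s \<and> d1) \<noteq> d0)) k"

lemma wk_compare:
  assumes "u \<in> V" "w \<in> V" "adj u w"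
  shows "wk c' (tp d0 u) (tp d1 w) k = tp (D (c \<noteq> c') d0 d1 k) (wk c u w k)"
  using assms
proof (induction k arbitrary: u w d0 d1)
  case 0 then show ?case by simp
next
  case (Suc k)
  have a: "adj w u" using Suc.prems adj_sym by blast
  have zV: "P c w u \<in> V" "adj w (P c w u)" using P_V Suc.prems a by auto
  have "P c' (tp d1 w) (tp d0 u) = tp ((c \<noteq> c') \<noteq> ((s \<and> d1) \<noteq> d0)) (P c w u)"
    using P_gen[OF Suc.prems(2,1) a] .
  then have "wk c' (tp d0 u) (tp d1 w) (Suc k) = wk c' (tp d1 w) (tp ((c \<noteq> c') \<noteq> ((s \<and> d1) \<noteq> d0)) (P c w u)) k"
    by (simp add: wk.simps)
  also have "\<dots> = tp (D (c \<noteq> c') d1 ((c \<noteq> c') \<noteq> ((s \<and> d1) \<noteq> d0)) k) (wk c w (P c w u) k)"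
    using Suc.IH[OF Suc.prems(2) zV] .
  finally show ?case by (simp add: wk.simps)
qed

end

context RW1
begin

lemma D_shift: "D e d0 d1 (m + k) = D e (D e d0 d1 m) (D e d0 d1 (Suc m)) k"
proof (induction m arbitrary: d0 d1)
  case 0 then show ?case by simp
next
  case (Suc m)
  show ?case using Suc.IH[of d1 "e \<noteq> ((s \<and> d1) \<noteq> d0)"] by simp
qed

lemma D_char:
  assumes "\<And>k. g (Suc (Suc k)) = (e \<noteq> ((s \<and> g (Suc k)) \<noteq> g k))"
  shows "g k = D e (g 0) (g (Suc 0)) k"
  using assms
proof (induction k arbitrary: g)
  case 0 then show ?case by simp
next
  case (Suc k)
  have "g (Suc k) = (g \<circ> Suc) k" by simp
  also have "\<dots> = D e ((g \<circ> Suc) 0) ((g \<circ> Suc) (Suc 0)) k"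
    using Suc.IH[of "g \<circ> Suc"] Suc.prems by simp
  also have "\<dots> = D e (g 0) (g (Suc 0)) (Suc k)" using Suc.prems[of 0] by simp
  finally show ?case .
qed

lemma D_per4:
  assumes "\<not> s"
  shows "D e d0 d1 k = D e d0 d1 (k mod 4)"
proof -
  have p: "D e d0 d1 (4 + k) = D e d0 d1 k" for k
  proof -
    have "D e d0 d1 4 = d0" "D e d0 d1 (Suc 4) = d1" using assms by (cases e; cases d0; cases d1; simp add: numeral_eq_Suc)+
    then show ?thesis using D_shift[of e d0 d1 4 k] by simp
  qed
  have "D e d0 d1 (4 * q + r) = D e d0 d1 r" for q r
  proof (induction q)
    case 0 then show ?case by simp
  next
    case (Suc q)
    have e: "4 * Suc q + r = 4 + (4 * q + r)" by simp
    show ?case unfolding e using p[of "4 * q + r"] Suc by (simp only:)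
  qed
  moreover have "k = 4 * (k div 4) + k mod 4" by simp
  ultimately show ?thesis by metis
qed

lemma D_per3:
  assumes "s"
  shows "D e d0 d1 k = D e d0 d1 (k mod 3)"
proof -
  have p: "D e d0 d1 (3 + k) = D e d0 d1 k" for k
  proof -
    have "D e d0 d1 3 = d0" "D e d0 d1 (Suc 3) = d1" using assms by (cases e; cases d0; cases d1; simp add: numeral_eq_Suc)+
    then show ?thesis using D_shift[of e d0 d1 3 k] by simp
  qed
  have "D e d0 d1 (3 * q + r) = D e d0 d1 r" for q r
  proof (induction q)
    case 0 then show ?case by simp
  next
    case (Suc q)
    have e: "3 * Suc q + r = 3 + (3 * q + r)" by simp
    show ?case unfolding e using p[of "3 * q + r"] Suc by (simp only:)
  qed
  moreover have "k = 3 * (k div 3) + k mod 3" by simp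
  ultimately show ?thesis by metis
qed

definition a0 where "a0 = (True, 0::nat)"

lemma a0V: "a0 \<in> V" and a0up: "up a0 (upT a0)" and va0: "upT a0 \<in> V"
  using w0V up_upT upT_V unfolding a0_def w0_def by auto

lemma tw_ne': "x \<in> V \<Longrightarrow> tw x \<noteq> x" using tw_ne by blast

lemma caseA:
  assumes "D True False False n"
  shows "\<exists>f\<in>F. \<exists>g\<in>F. card f \<noteq> card g"
proof -
  define a where "a = a0"
  define v where "v = upT a0"
  have aV: "a \<in> V" and vV: "v \<in> V" and av: "up a v" using a0V va0 a0up a_def v_def by auto
  have adj: "adj a v" using av adj_def by blast
  have eE: "{a, v} \<in> E" using edge_iff aV vV adj by blast
  have Y: "wk False a v n = tw (wk True a v n)"
    using wk_compare[OF aV vV adj, of False False False n True] assms by (simp add: tp_def)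
  have f1: "card (fc True {a, v}) = n \<longleftrightarrow> wk True a v n = a" using face_len[OF aV vV av] .
  have f2: "card (fc False {a, v}) = n \<longleftrightarrow> wk False a v n = a" using face_len[OF aV vV av] .
  have XV: "wk True a v n \<in> V" using wk_in[OF aV vV adj] .
  have "wk True a v n = a \<or> wk True a v n = tw a" using wk_n_cases[OF aV vV av] .
  then have "card (fc True {a, v}) \<noteq> card (fc False {a, v})"
  proof
    assume h: "wk True a v n = a"
    then have "wk False a v n \<noteq> a" using Y tw_ne by simp
    then show ?thesis using f1 f2 h by simp
  next
    assume h: "wk True a v n = tw a"
    then have "wk False a v n = a" using Y tw_tw aV by simp
    moreover have "wk True a v n \<noteq> a" using h tw_ne by metis
    ultimately show ?thesis using f1 f2 by simp
  qed
  then show ?thesis using fc[OF eE] by blast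
qed

lemma caseB:
  assumes "\<not> D False True False n"
  shows False
proof -
  define a where "a = a0"
  define v where "v = upT a0"
  have aV: "a \<in> V" and vV: "v \<in> V" and av: "up a v" using a0V va0 a0up a_def v_def by auto
  have adj: "adj a v" using av adj_def by blast
  have taV: "tw a \<in> V" using tw_V aV by blast
  have tav: "up (tw a) v" using up_twin aV vV av by blast
  have adj2: "adj (tw a) v" using tav adj_def by blast
  have eE: "{a, v} \<in> E" using edge_iff aV vV adj by blast
  have eE2: "{tw a, v} \<in> E" using edge_iff taV vV adj2 by blast
  have Z: "wk True (tw a) v n = wk True a v n"
    using wk_compare[OF aV vV adj, of True True False n True] assms by (simp add: tp_def)
  have f1: "card (fc True {a, v}) = n \<longleftrightarrow> wk True a v n = a" using face_len[OF aV vV av] .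
  have f2: "card (fc True {tw a, v}) = n \<longleftrightarrow> wk True (tw a) v n = tw a" using face_len[OF taV vV tav] .
  have eq: "card (fc True {tw a, v}) = card (fc True {a, v})"
    using col_card fc[OF eE] fc[OF eE2] by metis
  have "wk True a v n = a \<or> wk True a v n = tw a" using wk_n_cases[OF aV vV av] .
  then show False
  proof
    assume h: "wk True a v n = a"
    then have "wk True (tw a) v n \<noteq> tw a" using Z tw_ne by metis
    then show False using f1 f2 h eq by simp
  next
    assume h: "wk True a v n = tw a"
    then have "wk True a v n \<noteq> a" using tw_ne by metis
    then show False using f1 f2 h eq Z by simp
  qed
qed

lemma caseC:
  assumes "D False False True n"
  shows False
proof -
  define a where "a = a0"
  define v where "v = upT a0"
  have aV: "a \<in> V" and vV: "v \<in> V" and av: "up a v" using a0V va0 a0up a_def v_def by auto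
  have adj: "adj a v" using av adj_def by blast
  have tvV: "tw v \<in> V" using tw_V vV by blast
  have atv: "up a (tw v)" using up_twin aV vV av by blast
  have adj2: "adj a (tw v)" using atv adj_def by blast
  have eE: "{a, v} \<in> E" using edge_iff aV vV adj by blast
  have eE2: "{a, tw v} \<in> E" using edge_iff aV tvV adj2 by blast
  have Z: "wk True a (tw v) n = tw (wk True a v n)"
    using wk_compare[OF aV vV adj, of True False True n True] assms by (simp add: tp_def)
  have f1: "card (fc True {a, v}) = n \<longleftrightarrow> wk True a v n = a" using face_len[OF aV vV av] .
  have f2: "card (fc True {a, tw v}) = n \<longleftrightarrow> wk True a (tw v) n = a" using face_len[OF aV tvV atv] .
  have eq: "card (fc True {a, tw v}) = card (fc True {a, v})"
    using col_card fc[OF eE] fc[OF eE2] by metis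
  have "wk True a v n = a \<or> wk True a v n = tw a" using wk_n_cases[OF aV vV av] .
  then show False
  proof
    assume h: "wk True a v n = a"
    then have "wk True a (tw v) n \<noteq> a" using Z tw_ne by metis
    then show False using f1 f2 h eq by simp
  next
    assume h: "wk True a v n = tw a"
    then have "wk True a (tw v) n = a" using Z tw_tw aV by simp
    moreover have "wk True a v n \<noteq> a" using h tw_ne by metis
    ultimately show False using f1 f2 eq by simp
  qed
qed

end

context RW1
begin

definition mem :: "bool \<times> nat \<Rightarrow> bool" where
  "mem x \<longleftrightarrow> (if s then bl x mod 3 = 0 else (bl x mod 4 = 0 \<or> bl x mod 4 = 1))"

definition sw :: "bool \<times> nat \<Rightarrow> bool \<times> nat" where
  "sw x = (if x \<in> V then tp (mem x) x else x)"

lemma sw_V: "x \<in> V \<Longrightarrow> sw x \<in> V" unfolding sw_def using tp_V by simp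
lemma bl_sw: "x \<in> V \<Longrightarrow> bl (sw x) = bl x" unfolding sw_def using bl_tp by simp
lemma mem_sw: "x \<in> V \<Longrightarrow> mem (sw x) = mem x" unfolding mem_def using bl_sw by simp
lemma sw_tp: "x \<in> V \<Longrightarrow> sw x = tp (mem x) x" unfolding sw_def by simp
lemma sw_sw: "x \<in> V \<Longrightarrow> sw (sw x) = x"
proof -
  assume xV: "x \<in> V"
  have "sw (sw x) = tp (mem (sw x)) (tp (mem x) x)" using sw_tp sw_V xV by simp
  also have "\<dots> = tp (mem x) (tp (mem x) x)" using mem_sw xV by simp
  also have "\<dots> = x" using tp_tp xV by (simp add: tp_def)
  finally show ?thesis .
qed
lemma adj_sw: "x \<in> V \<Longrightarrow> y \<in> V \<Longrightarrow> adj (sw x) (sw y) \<longleftrightarrow> adj x y"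
  unfolding adj_def up_def using bl_sw by simp
lemma up_sw: "x \<in> V \<Longrightarrow> y \<in> V \<Longrightarrow> up (sw x) (sw y) \<longleftrightarrow> up x y"
  unfolding up_def using bl_sw by simp

lemma bl_wk_mod:
  assumes "u \<in> V" "w \<in> V" "up u w"
  shows "bl (wk c u w k) = (bl u + int k) mod int n"
proof -
  have a: "adj u w" using assms adj_def by blast
  have V1: "wk c u w k \<in> V" using wk_in[OF assms(1,2) a] .
  have "int n dvd (bl (wk c u w k) - (bl u + int k))" using wk_bl[OF assms] by (simp add: algebra_simps)
  then have "bl (wk c u w k) mod int n = (bl u + int k) mod int n" by (simp add: mod_eq_dvd_iff)
  then show ?thesis using bl_mod[OF V1] by simp
qed

lemma mem_rec:
  assumes cond: "(\<not> s \<and> 4 dvd n) \<or> (s \<and> 3 dvd n)"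
    and uw: "u \<in> V" "w \<in> V" "up u w"
  shows "mem (wk c u w (Suc (Suc k))) = (True \<noteq> ((s \<and> mem (wk c u w (Suc k))) \<noteq> mem (wk c u w k)))"
proof -
  define x where "x = bl u + int k"
  have b0: "bl (wk c u w k) = x mod int n" using bl_wk_mod[OF uw] x_def by simp
  have b1: "bl (wk c u w (Suc k)) = (x + 1) mod int n" using bl_wk_mod[OF uw, of c "Suc k"] x_def by (simp add: algebra_simps)
  have b2: "bl (wk c u w (Suc (Suc k))) = (x + 2) mod int n" using bl_wk_mod[OF uw, of c "Suc (Suc k)"] x_def by (simp add: algebra_simps)
  from cond show ?thesis
  proof
    assume h: "\<not> s \<and> 4 dvd n"
    have d: "(4::int) dvd int n" using h int_dvd_int_iff[of 4 n] by simp
    have m: "(y mod int n) mod 4 = y mod 4" for y :: int using mod_mod_cancel[OF d] .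
    have "mem (wk c u w k) \<longleftrightarrow> (x mod 4 = 0 \<or> x mod 4 = 1)" unfolding mem_def using h b0 m by simp
    moreover have "mem (wk c u w (Suc (Suc k))) \<longleftrightarrow> ((x + 2) mod 4 = 0 \<or> (x + 2) mod 4 = 1)"
      unfolding mem_def using h b2 m by simp
    moreover have "((x + 2) mod 4 = 0 \<or> (x + 2) mod 4 = 1) \<longleftrightarrow> \<not> (x mod 4 = 0 \<or> x mod 4 = 1)" by presburger
    ultimately show ?thesis using h by simp
  next
    assume h: "s \<and> 3 dvd n"
    have d: "(3::int) dvd int n" using h int_dvd_int_iff[of 3 n] by simp
    have m: "(y mod int n) mod 3 = y mod 3" for y :: int using mod_mod_cancel[OF d] .
    have "mem (wk c u w k) \<longleftrightarrow> x mod 3 = 0" unfolding mem_def using h b0 m by simp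
    moreover have "mem (wk c u w (Suc k)) \<longleftrightarrow> (x + 1) mod 3 = 0" unfolding mem_def using h b1 m by simp
    moreover have "mem (wk c u w (Suc (Suc k))) \<longleftrightarrow> (x + 2) mod 3 = 0" unfolding mem_def using h b2 m by simp
    moreover have "((x + 2) mod 3 = 0) \<longleftrightarrow> (((x + 1) mod 3 = 0) = (x mod 3 = 0))" by presburger
    ultimately show ?thesis using h by auto
  qed
qed

lemma sw_wk:
  assumes cond: "(\<not> s \<and> 4 dvd n) \<or> (s \<and> 3 dvd n)"
    and uw: "u \<in> V" "w \<in> V" "up u w"
  shows "sw (wk c u w k) = wk (\<not> c) (sw u) (sw w) k"
proof -
  have a: "adj u w" using uw adj_def by blast
  define g where "g k = mem (wk c u w k)" for k
  have g0: "g 0 = mem u" and g1: "g (Suc 0) = mem w" unfolding g_def using wk_1 by simp_all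
  have "g k = D True (g 0) (g (Suc 0)) k"
    by (rule D_char) (simp add: g_def mem_rec[OF cond uw])
  then have gk: "mem (wk c u w k) = D True (mem u) (mem w) k" using g0 g1 g_def by simp
  have "wk (\<not> c) (tp (mem u) u) (tp (mem w) w) k = tp (D (c \<noteq> (\<not> c)) (mem u) (mem w) k) (wk c u w k)"
    using wk_compare[OF uw(1,2) a] .
  also have "\<dots> = tp (mem (wk c u w k)) (wk c u w k)" using gk by simp
  also have "\<dots> = sw (wk c u w k)" using sw_tp wk_in[OF uw(1,2) a] by simp
  finally show ?thesis using sw_tp uw by simp
qed

lemma fimg_sw_fc:
  assumes cond: "(\<not> s \<and> 4 dvd n) \<or> (s \<and> 3 dvd n)"
    and uw: "u \<in> V" "w \<in> V" "up u w"
  shows "fimg sw (fc c {u, w}) = fc (\<not> c) {sw u, sw w}"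
proof -
  have a: "adj u w" using uw adj_def by blast
  have V2: "sw u \<in> V" "sw w \<in> V" using sw_V uw by auto
  have a2: "adj (sw u) (sw w)" using adj_sw uw a by simp
  have "fimg sw (fc c {u, w}) = (\<lambda>e. sw ` e) ` range (\<lambda>k. {wk c u w k, wk c u w (Suc k)})"
    unfolding fimg_def using face_walk[OF uw(1,2) a] by simp
  also have "\<dots> = range (\<lambda>k. {sw (wk c u w k), sw (wk c u w (Suc k))})" by (auto simp: image_iff)
  also have "\<dots> = range (\<lambda>k. {wk (\<not> c) (sw u) (sw w) k, wk (\<not> c) (sw u) (sw w) (Suc k)})"
    using sw_wk[OF cond uw] by simp
  also have "\<dots> = fc (\<not> c) {sw u, sw w}" using face_walk[OF V2 a2] by simp
  finally show ?thesis .
qed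

lemma face_sw:
  assumes cond: "(\<not> s \<and> 4 dvd n) \<or> (s \<and> 3 dvd n)" and fF: "f \<in> F"
  shows "fimg sw f \<in> F"
proof -
  obtain e x where ex: "e \<in> f" "x \<in> e" using cyc_ne[OF F_cyc[OF fF]] by blast
  have eE: "e \<in> E" using ex fF F_E by blast
  obtain p q where pq: "p \<in> V" "q \<in> V" "adj p q" "e = {p, q}" using E_sub[OF eE] by blast
  obtain u w where uw: "u \<in> V" "w \<in> V" "up u w" "e = {u, w}"
  proof (cases "up p q")
    case True then show ?thesis using that pq by blast
  next
    case False then have "up q p" using pq adj_def by blast
    then show ?thesis using that[of q p] pq by (auto simp: insert_commute)
  qed
  have "fc (col f) {u, w} = f" using fc_uniq[OF fF] ex(1) uw(4) by simp
  then have "fimg sw f = fc (\<not> col f) {sw u, sw w}" using fimg_sw_fc[OF cond uw(1-3)] by metis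
  moreover have "{sw u, sw w} \<in> E"
    using edge_iff sw_V uw adj_sw adj_def by metis
  ultimately show ?thesis using fc by metis
qed

lemma sw_G:
  assumes cond: "(\<not> s \<and> 4 dvd n) \<or> (s \<and> 3 dvd n)"
  shows "G sw"
proof -
  have b: "bij_betw sw V V"
    by (rule bij_betw_byWitness[where f' = sw]) (auto simp: sw_sw sw_V)
  have adjE: "\<forall>u\<in>V. \<forall>v\<in>V. {u, v} \<in> E \<longleftrightarrow> {sw u, sw v} \<in> E"
    using edge_iff sw_V adj_sw by metis
  have "fimg sw ` F = F"
  proof
    show "fimg sw ` F \<subseteq> F" using face_sw[OF cond] by blast
    show "F \<subseteq> fimg sw ` F"
    proof
      fix f assume fF: "f \<in> F"
      have "fimg sw (fimg sw f) = fimg (sw \<circ> sw) f" unfolding fimg_def by (simp add: image_comp)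
      also have "\<dots> = f" using fimg_id_on[OF _ fF, of "sw \<circ> sw"] sw_sw by simp
      finally show "f \<in> fimg sw ` F" using face_sw[OF cond fF] by (metis image_eqI)
    qed
  qed
  then show ?thesis using b adjE unfolding map_aut_def fimg_def by blast
qed

lemma swap_False:
  assumes cond: "(\<not> s \<and> 4 dvd n) \<or> (s \<and> 3 dvd n)"
  shows False
proof -
  define i :: nat where "i = (if s then 1 else 2)"
  define v0 where "v0 = (True, i)"
  define w1 where "w1 = upT v0"
  have n8: "\<not> s \<Longrightarrow> n \<ge> 8"
  proof -
    assume "\<not> s"
    then have "4 dvd n" using cond by blast
    then obtain q where "n = 4 * q" by blast
    then show "n \<ge> 8" using n3 n4 by (cases q) auto
  qed
  have iN: "i + 1 < n" using n3 n8 i_def by (cases s) auto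
  have v0V: "v0 \<in> V" using iN v0_def by (simp add: inV)
  have w1: "w1 = (True, i + 1)" using iN unfolding w1_def v0_def upT_def by simp
  have w1V: "w1 \<in> V" using w1 iN by (simp add: inV)
  have uv: "up v0 w1" using up_upT v0V w1_def by simp
  have bv: "bl v0 = int i" "bl w1 = int (i + 1)" using v0_def w1 by (simp_all add: bl_def)
  have mv: "\<not> mem v0" "\<not> mem w1" unfolding mem_def using bv i_def by (cases s; simp)+
  have sv: "sw v0 = v0" "sw w1 = w1" using sw_tp v0V w1V mv by (simp_all add: tp_def)
  have eE: "{v0, w1} \<in> E" using edge_iff v0V w1V uv adj_def by blast
  define f0 where "f0 = fc True {v0, w1}"
  have f0: "f0 \<in> F" "{v0, w1} \<in> f0" "col f0" using fc[OF eE] f0_def by auto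
  have img: "fimg sw f0 = fc False {v0, w1}" using fimg_sw_fc[OF cond v0V w1V uv, of True] sv f0_def by simp
  have f1: "fimg sw f0 \<in> F" "{v0, w1} \<in> fimg sw f0" "\<not> col (fimg sw f0)" using fc[OF eE] img by auto
  have ne: "fimg sw f0 \<noteq> f0" using f0(3) f1(3) by auto
  have p: "(v0, {v0, w1}, f0) \<in> flags F" using f0 flags_iff by auto
  have q: "(v0, {v0, w1}, fimg sw f0) \<in> flags F" using f1 flags_iff by auto
  have "flag_act sw (v0, {v0, w1}, f0) = (v0, {v0, w1}, fimg sw f0)" using flag_act_simp sv by simp
  then have "(v0, {v0, w1}, fimg sw f0) \<in> orb (v0, {v0, w1}, f0)" using sw_G[OF cond] orb_mem by metis
  then show False using R2[OF p q ne] by blast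
qed

end

context RW1
begin

lemma caseI: "\<exists>f\<in>F. \<exists>g\<in>F. card f \<noteq> card g"
proof (cases "D True False False n")
  case True then show ?thesis using caseA by blast
next
  case nA: False
  have nB: "D False True False n" using caseB by blast
  have nC: "\<not> D False False True n" using caseC by blast
  have cond: "(\<not> s \<and> 4 dvd n) \<or> (s \<and> 3 dvd n)"
  proof (cases s)
    case False
    have r: "n mod 4 < 4" by simp
    have A: "\<not> D True False False (n mod 4)" using nA D_per4 False by metis
    have B: "D False True False (n mod 4)" using nB D_per4 False by metis
    have "n mod 4 = 0 \<or> n mod 4 = 1 \<or> n mod 4 = 2 \<or> n mod 4 = 3" using r by linarith
    then have "n mod 4 = 0" using A B False by (auto simp: numeral_2_eq_2 numeral_3_eq_3)
    then show ?thesis using False by auto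
  next
    case True
    have r: "n mod 3 < 3" by simp
    have C: "\<not> D False False True (n mod 3)" using nC D_per3 True by metis
    have "n mod 3 = 0 \<or> n mod 3 = 1 \<or> n mod 3 = 2" using r by linarith
    then have "n mod 3 = 0" using C True by (auto simp: numeral_2_eq_2)
    then show ?thesis using True by auto
  qed
  then show ?thesis using swap_False by blast
qed

end

context RW
begin

lemma two_lengths: "\<exists>f\<in>F. \<exists>g\<in>F. card f \<noteq> card g"
proof (cases "\<exists>f v a. f \<in> F \<and> {v, a} \<in> f \<and> {v, tw a} \<in> f")
  case True
  then obtain f v a where "f \<in> F" "{v, a} \<in> f" "{v, tw a} \<in> f" by blast
  then show ?thesis using caseII by blast
next
  case False
  interpret RW1 n F
    by unfold_locales (use False in blast)
  show ?thesis using caseI .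
qed

lemma main_card: "card ((\<lambda>f. card f) ` F) = 2"
proof -
  obtain f g where fg: "f \<in> F" "g \<in> F" "card f \<noteq> card g" using two_lengths by blast
  have cfg: "col f \<noteq> col g" using col_card fg by blast
  have "(\<lambda>f. card f) ` F = {card f, card g}"
  proof
    show "(\<lambda>f. card f) ` F \<subseteq> {card f, card g}"
    proof
      fix x assume "x \<in> (\<lambda>f. card f) ` F"
      then obtain h where h: "h \<in> F" "x = card h" by blast
      have "col h = col f \<or> col h = col g" using cfg by blast
      then have "card h = card f \<or> card h = card g"
      proof
        assume "col h = col f" then show ?thesis using col_card[OF h(1) fg(1)] by blast
      next
        assume "col h = col g" then show ?thesis using col_card[OF h(1) fg(2)] by blast
      qed
      then show "x \<in> {card f, card g}" using h by blast
    qed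
    show "{card f, card g} \<subseteq> (\<lambda>f. card f) ` F" using fg by blast
  qed
  then show ?thesis using fg by simp
qed

end

theorem lemma3p2:
  fixes n :: nat and F :: "(bool \<times> nat) set set set"
  assumes "n \<ge> 3" and "n \<noteq> 4"
    and "polytopal_map (rose_V n) (rose_E n 2 1) F"
    and "class_2_01 (rose_V n) (rose_E n 2 1) F"
  shows "card ((\<lambda>f. card f) ` F) = 2"
proof -
  interpret RW n F using assms by unfold_locales
  show ?thesis by (rule main_card)
qed


end
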